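(* For every $p,q\in(0,\infty)$ and $r\in(0,q]$ there exist constants $C=C(p,q,r)$ and $c=c(p,q,r)$ such that the following holds. Let $X$ be a finite set, $\mu,\nu$ outer measures on $X$, and $\omega$ a measure on $X$. For every $f\in L^p_\mu(\ell^q_\nu(\ell^r_\omega))$ on $X$ there exists a collection $\{E_k:k\in\mathbb Z\}$ of pairwise disjoint subsets of $X$ forming a partition of the support of $f$ such that, setting $F_k=\bigcup_{l\ge k}E_l$, for every $k\in\mathbb Z$: (a) if $E_k\ne\varnothing$, then $\ell^q_\nu(\ell^r_\omega)(f1_{X\setminus F_{k+1}})(E_k)>c2^k$; (b) $\|f1_{X\setminus F_k}\|_{L^\infty_\mu(\ell^q_\nu(\ell^r_\omega))}\le2^k$; (c) $\mu(\ell^q_\nu(\ell^r_\omega)(f)>2^k)\le\mu(F_k)$; (d) $\mu(E_k)\le C\mu(\ell^q_\nu(\ell^r_\omega)(f)>c2^k)$. In particular, there is a constant $C'=C'(p,q,r)$ with $C'^{-1}\|f\|^p_{L^p_\mu(\ell^q_\nu(\ell^r_\omega))}\le\sum_{k\in\mathbb Z}2^{kp}\mu(E_k)\le C'\|f\|^p_{L^p_\mu(\ell^q_\nu(\ell^r_\omega))}$, and the same two-sided bound holds with $\sum_k 2^{kp}\mu(E_k)$ replaced by $\sum_{k}2^{kp}\sum_{l\ge k}\mu(E_l)$.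
   Context: An outer measure on $X$ is a monotone, subadditive function $\mathcal P(X)\to[0,\infty]$ vanishing on $\varnothing$; standing assumption: outer measures are finite and strictly positive on nonempty subsets; $\omega$ is given by a finite strictly positive weight. The support of $f$ is $\{x:f(x)\ne0\}$. Quasi-norms: for nonempty $A$, $\ell^r_\omega(f)(A)=\nu(A)^{-1/r}\|f1_A\|_{L^r(X,\omega)}$; $\|f\|_{L^\infty_\nu(\ell^r_\omega)}=\sup_{\varnothing\ne A}\ell^r_\omega(f)(A)$; $\nu(\ell^r_\omega(f)>\lambda)=\inf\{\nu(B):\|f1_{X\setminus B}\|_{L^\infty_\nu(\ell^r_\omega)}\le\lambda\}$; $\|f\|_{L^q_\nu(\ell^r_\omega)}=(\int_0^\infty q\lambda^{q-1}\nu(\ell^r_\omega(f)>\lambda)d\lambda)^{1/q}$; $\ell^q_\nu(\ell^r_\omega)(f)(A)=\mu(A)^{-1/q}\|f1_A\|_{L^q_\nu(\ell^r_\omega)}$; $\|f\|_{L^\infty_\mu(\ell^q_\nu(\ell^r_\omega))}=\sup_{\varnothing\ne A}\ell^q_\nu(\ell^r_\omega)(f)(A)$; $\mu(\ell^q_\nu(\ell^r_\omega)(f)>\lambda)=\inf\{\mu(B):\|f1_{X\setminus B}\|_{L^\infty_\mu(\ell^q_\nu(\ell^r_\omega))}\le\lambda\}$; $\|f\|_{L^p_\mu(\ell^q_\nu(\ell^r_\omega))}=(\int_0^\infty p\lambda^{p-1}\mu(\ell^q_\nu(\ell^r_\omega)(f)>\lambda)d\lambda)^{1/p}$. *)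

theory Defs
  imports "HOL-Analysis.Analysis"
begin

text \<open>On a finite ground set, countable subadditivity is
equivalent to finite subadditivity.\<close>
definition outer_measure_on :: "'a set \<Rightarrow> ('a set \<Rightarrow> real) \<Rightarrow> bool" where
  "outer_measure_on X \<mu> \<longleftrightarrow>
     \<mu> {} = 0 \<and>
     (\<forall>A B. A \<subseteq> B \<longrightarrow> B \<subseteq> X \<longrightarrow> \<mu> A \<le> \<mu> B) \<and>
     (\<forall>A B. A \<subseteq> X \<longrightarrow> B \<subseteq> X \<longrightarrow> \<mu> (A \<union> B) \<le> \<mu> A + \<mu> B) \<and>
     (\<forall>A. A \<subseteq> X \<longrightarrow> A \<noteq> {} \<longrightarrow> \<mu> A > 0)"

definition restr :: "'a set \<Rightarrow> ('a \<Rightarrow> real) \<Rightarrow> 'a \<Rightarrow> real" where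
  "restr A f = (\<lambda>x. if x \<in> A then f x else 0)"

definition supp_on :: "'a set \<Rightarrow> ('a \<Rightarrow> real) \<Rightarrow> 'a set" where
  "supp_on X f = {x \<in> X. f x \<noteq> 0}"

text \<open>L^r(X,\<omega>) norm, \<omega> given by the weight w\<close>
definition Lr_norm :: "'a set \<Rightarrow> ('a \<Rightarrow> real) \<Rightarrow> real \<Rightarrow> ('a \<Rightarrow> real) \<Rightarrow> real" where
  "Lr_norm X w r f = (\<Sum>x\<in>X. w x * \<bar>f x\<bar> powr r) powr (1 / r)"

definition ell_r :: "'a set \<Rightarrow> ('a \<Rightarrow> real) \<Rightarrow> ('a set \<Rightarrow> real) \<Rightarrow> real
                      \<Rightarrow> ('a \<Rightarrow> real) \<Rightarrow> 'a set \<Rightarrow> real" where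
  "ell_r X w \<nu> r f A = \<nu> A powr (- 1 / r) * Lr_norm X w r (restr A f)"

text \<open>L^\<infinity>_\<mu>(\<rho>): supremum of the local size \<rho> f A over nonempty A \<subseteq> X
  (all values are nonnegative; the 0 only matters for X = {} where the sup is empty).\<close>
definition Linf :: "'a set \<Rightarrow> (('a \<Rightarrow> real) \<Rightarrow> 'a set \<Rightarrow> real) \<Rightarrow> ('a \<Rightarrow> real) \<Rightarrow> real" where
  "Linf X \<rho> f = Sup (insert 0 ((\<lambda>A. \<rho> f A) ` {A. A \<subseteq> X \<and> A \<noteq> {}}))"

definition superlevel :: "'a set \<Rightarrow> ('a set \<Rightarrow> real) \<Rightarrow> (('a \<Rightarrow> real) \<Rightarrow> 'a set \<Rightarrow> real)
                          \<Rightarrow> ('a \<Rightarrow> real) \<Rightarrow> real \<Rightarrow> real" where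
  "superlevel X \<mu> \<rho> f s = Inf (\<mu> ` {B. B \<subseteq> X \<and> Linf X \<rho> (restr (X - B) f) \<le> s})"

definition Lp_norm :: "'a set \<Rightarrow> ('a set \<Rightarrow> real) \<Rightarrow> (('a \<Rightarrow> real) \<Rightarrow> 'a set \<Rightarrow> real)
                       \<Rightarrow> real \<Rightarrow> ('a \<Rightarrow> real) \<Rightarrow> real" where
  "Lp_norm X \<mu> \<rho> p f =
     (LBINT t:{0<..}. p * t powr (p - 1) * superlevel X \<mu> \<rho> f t) powr (1 / p)"

definition ell_q :: "'a set \<Rightarrow> ('a set \<Rightarrow> real) \<Rightarrow> ('a set \<Rightarrow> real) \<Rightarrow> (('a \<Rightarrow> real) \<Rightarrow> 'a set \<Rightarrow> real)
                      \<Rightarrow> real \<Rightarrow> ('a \<Rightarrow> real) \<Rightarrow> 'a set \<Rightarrow> real" where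
  "ell_q X \<mu> \<nu> \<rho> q f A = \<mu> A powr (- 1 / q) * Lp_norm X \<nu> \<rho> q (restr A f)"

end

theory Submission
  imports Defs
begin

lemma powr_int_0b:
  fixes p b :: real
  assumes p: "p > 0" and b: "b \<ge> 0"
  shows "integrable lborel (\<lambda>t. indicator {0<..b} t * (p * t powr (p-1)))"
    "integral\<^sup>L lborel (\<lambda>t. indicator {0<..b} t * (p * t powr (p-1))) = b powr p"
proof -
  have h0: "((\<lambda>x. x powr (p-1)) has_integral (b powr (p - 1 + 1) / (p - 1 + 1))) {0..b}"
    by (rule has_integral_powr_from_0) (use p b in auto)
  hence "((\<lambda>x. p * x powr (p-1)) has_integral (p * (b powr p / p))) {0..b}"
    by (intro has_integral_mult_right) simp
  hence h1: "((\<lambda>x. p * x powr (p-1)) has_integral b powr p) {0..b}" using p by simp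
  have h2: "((\<lambda>x. p * x powr (p-1)) has_integral b powr p) {0<..b}"
    using h1 by (subst has_integral_spike_set_eq[where S="{0<..b}" and T="{0..b}"])
      (auto intro!: negligible_subset[OF negligible_empty])
  have ai: "(\<lambda>x. p * x powr (p-1)) absolutely_integrable_on {0<..b}"
    by (rule nonnegative_absolutely_integrable_1) (use h2 p in \<open>auto simp: integrable_on_def\<close>)
  have meas: "(\<lambda>t. indicator {0<..b} t * (p * t powr (p-1))) \<in> borel_measurable lborel"
    by measurable
  have il: "integrable lebesgue (\<lambda>t. indicator {0<..b} t * (p * t powr (p-1)))"
    using ai unfolding set_integrable_def by simp
  show "integrable lborel (\<lambda>t. indicator {0<..b} t * (p * t powr (p-1)))"
    using il integrable_completion[OF meas] by simp
  have "(LINT x:{0<..b} | lebesgue. p * x powr (p-1)) = integral {0<..b} (\<lambda>x. p * x powr (p-1))"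
    by (rule set_lebesgue_integral_eq_integral(2)) (use ai in simp)
  also have "\<dots> = b powr p" using h2 by (rule integral_unique)
  finally have "integral\<^sup>L lebesgue (\<lambda>t. indicator {0<..b} t * (p * t powr (p-1))) = b powr p"
    unfolding set_lebesgue_integral_def by simp
  thus "integral\<^sup>L lborel (\<lambda>t. indicator {0<..b} t * (p * t powr (p-1))) = b powr p"
    using integral_completion[OF meas] by simp
qed

lemma powr_le_iff_base:
  fixes x y s :: real
  assumes "0 \<le> x" "0 \<le> y" "0 < s"
  shows "x powr s \<le> y powr s \<longleftrightarrow> x \<le> y"
  using assms powr_mono2[of s x y] powr_less_mono2[of s y x] by (auto simp: not_le[symmetric])

lemma powr_less_iff_base:
  fixes x y s :: real
  assumes "0 \<le> x" "0 \<le> y" "0 < s"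
  shows "x powr s < y powr s \<longleftrightarrow> x < y"
  using powr_le_iff_base[OF assms(2,1,3)] by (auto simp: not_le[symmetric])

lemma restr_restr: "restr A (restr B g) = restr (A \<inter> B) g"
  by (auto simp: restr_def)

lemma restr_empty: "restr {} g = (\<lambda>_. 0)"
  by (auto simp: restr_def)

lemma restr_zero: "restr A (\<lambda>_. 0) = (\<lambda>_. 0)"
  by (auto simp: restr_def)

lemma restr_cong_set:
  assumes "A \<inter> {x. g x \<noteq> 0} = B \<inter> {x. g x \<noteq> 0}" shows "restr A g = restr B g"
proof
  fix x show "restr A g x = restr B g x"
  proof (cases "g x = 0")
    case True then show ?thesis by (simp add: restr_def)
  next
    case False then have "x \<in> A \<longleftrightarrow> x \<in> B" using assms by blast
    then show ?thesis by (simp add: restr_def)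
  qed
qed

locale lvl =
  fixes X :: "'a set" and m :: "'a set \<Rightarrow> real" and M :: "('a \<Rightarrow> real) \<Rightarrow> real" and s :: real
  assumes finX: "finite X" and om: "outer_measure_on X m" and s_pos: "s > 0"
    and M_nonneg: "\<And>g. M g \<ge> 0"
    and M_zero: "M (\<lambda>_. 0) = 0"
    and M_mono: "\<And>g D D'. D \<subseteq> D' \<Longrightarrow> D' \<subseteq> X \<Longrightarrow> M (restr D g) \<le> M (restr D' g)"
    and M_pos: "\<And>g x. x \<in> X \<Longrightarrow> g x \<noteq> 0 \<Longrightarrow> M (restr {x} g) > 0"
begin

definition rho where "rho g A = m A powr (-1/s) * M (restr A g)"
definition S where "S g = Linf X rho g"
definition sig where "sig g t = superlevel X m rho g t"

lemma m_empty: "m {} = 0" using om by (simp add: outer_measure_on_def)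
lemma m_mono: "A \<subseteq> B \<Longrightarrow> B \<subseteq> X \<Longrightarrow> m A \<le> m B" using om by (simp add: outer_measure_on_def)
lemma m_nonneg: "A \<subseteq> X \<Longrightarrow> 0 \<le> m A" using m_mono[of "{}" A] m_empty by simp
lemma m_pos: "A \<subseteq> X \<Longrightarrow> A \<noteq> {} \<Longrightarrow> 0 < m A" using om by (simp add: outer_measure_on_def)
lemma m_un: "A \<subseteq> X \<Longrightarrow> B \<subseteq> X \<Longrightarrow> m (A \<union> B) \<le> m A + m B" using om by (simp add: outer_measure_on_def)

lemma m_UN: "finite I \<Longrightarrow> (\<forall>i\<in>I. D i \<subseteq> X) \<Longrightarrow> m (\<Union>i\<in>I. D i) \<le> (\<Sum>i\<in>I. m (D i))"
proof (induction I rule: finite_induct)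
  case empty then show ?case by (simp add: m_empty)
next
  case (insert a I)
  have "m (\<Union>i\<in>insert a I. D i) = m (D a \<union> (\<Union>i\<in>I. D i))" by simp
  also have "\<dots> \<le> m (D a) + m (\<Union>i\<in>I. D i)" using insert by (intro m_un) auto
  also have "\<dots> \<le> m (D a) + (\<Sum>i\<in>I. m (D i))" using insert by auto
  finally show ?case using insert by simp
qed

lemma rho_nonneg: "rho g A \<ge> 0"
  unfolding rho_def using M_nonneg by simp

lemma rho_empty: "rho g {} = 0"
  unfolding rho_def by (simp add: m_empty)

lemma M_restr_zero: "M (restr A (\<lambda>_. 0)) = 0"
  by (simp add: restr_zero M_zero)

lemma rho_zero: "rho (\<lambda>_. 0) A = 0"
  unfolding rho_def by (simp add: M_restr_zero)

definition Rset where "Rset g = insert 0 ((\<lambda>A. rho g A) ` {A. A \<subseteq> X \<and> A \<noteq> {}})"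

lemma Rset_fin: "finite (Rset g)"
  unfolding Rset_def using finX by auto

lemma S_eq: "S g = Max (Rset g)"
  unfolding S_def Linf_def Rset_def[symmetric] using Rset_fin by (intro cSup_eq_Max) (auto simp: Rset_def)

lemma S_ge: "A \<subseteq> X \<Longrightarrow> rho g A \<le> S g"
  unfolding S_eq using Rset_fin
  by (cases "A = {}") (auto simp: Rset_def rho_empty intro!: Max_ge)

lemma S_nonneg: "0 \<le> S g"
  unfolding S_eq using Rset_fin by (auto simp: Rset_def intro!: Max_ge)

lemma S_le_iff: "S g \<le> l \<longleftrightarrow> 0 \<le> l \<and> (\<forall>A. A \<subseteq> X \<longrightarrow> A \<noteq> {} \<longrightarrow> rho g A \<le> l)"
  unfolding S_eq using Rset_fin by (auto simp: Rset_def Max_le_iff)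

lemma S_zero: "S (\<lambda>_. 0) = 0"
  using S_le_iff[of "\<lambda>_. 0" 0] S_nonneg[of "\<lambda>_. 0"] by (simp add: rho_zero)

lemma rho_restrX: "A \<subseteq> X \<Longrightarrow> rho (restr X g) A = rho g A"
  unfolding rho_def restr_restr by (simp add: Int_absorb2)

lemma S_restrX: "S (restr X g) = S g"
proof -
  have "Rset (restr X g) = Rset g" unfolding Rset_def
    by (rule arg_cong[where f="insert 0"], rule image_cong) (auto simp: rho_restrX)
  thus ?thesis by (simp add: S_eq)
qed

lemma rho_le_iff:
  assumes "A \<subseteq> X" "A \<noteq> {}" "0 \<le> l"
  shows "rho g A \<le> l \<longleftrightarrow> M (restr A g) powr s \<le> l powr s * m A"
proof -
  have a: "m A > 0" using m_pos assms by auto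
  define Mv where "Mv = M (restr A g)"
  have Mv: "Mv \<ge> 0" using M_nonneg Mv_def by simp
  have "rho g A \<le> l \<longleftrightarrow> Mv \<le> l * m A powr (1/s)"
  proof -
    have e: "m A powr (-1/s) * m A powr (1/s) = 1"
      using a by (simp add: powr_add[symmetric])
    have pos: "m A powr (1/s) > 0" using a by simp
    have "rho g A \<le> l \<longleftrightarrow> rho g A * m A powr (1/s) \<le> l * m A powr (1/s)"
      using pos by simp
    also have "rho g A * m A powr (1/s) = Mv"
      unfolding rho_def Mv_def using e by (metis mult.commute mult.left_commute mult_1_right)
    finally show ?thesis .
  qed
  also have "\<dots> \<longleftrightarrow> Mv powr s \<le> (l * m A powr (1/s)) powr s"
    using Mv a assms s_pos by (intro powr_le_iff_base[symmetric]) auto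
  also have "(l * m A powr (1/s)) powr s = l powr s * m A"
    using a assms s_pos by (simp add: powr_mult powr_powr)
  finally show ?thesis unfolding Mv_def .
qed

lemma rho_gt_iff:
  assumes "A \<subseteq> X" "A \<noteq> {}" "0 \<le> l"
  shows "l < rho g A \<longleftrightarrow> l powr s * m A < M (restr A g) powr s"
  using rho_le_iff[OF assms, of g] by linarith

definition cand where "cand g t = {B. B \<subseteq> X \<and> S (restr (X - B) g) \<le> t}"

lemma cand_X: "0 \<le> t \<Longrightarrow> X \<in> cand g t"
  unfolding cand_def by (simp add: restr_empty S_zero)

lemma sig_eq: "0 \<le> t \<Longrightarrow> sig g t = Min (m ` cand g t)"
  unfolding sig_def superlevel_def cand_def[symmetric] S_def[symmetric]
  using finX cand_X[of t g] by (intro cInf_eq_Min) (auto simp: cand_def)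

lemma sig_le: "B \<subseteq> X \<Longrightarrow> S (restr (X - B) g) \<le> t \<Longrightarrow> sig g t \<le> m B"
  using S_nonneg[of "restr (X - B) g"] sig_eq[of t g] finX
  by (auto simp: cand_def intro!: Min_le)

lemma sig_attained: "0 \<le> t \<Longrightarrow> \<exists>B. B \<subseteq> X \<and> S (restr (X - B) g) \<le> t \<and> sig g t = m B"
proof -
  assume t: "0 \<le> t"
  have "finite (m ` cand g t)" using finX by (auto simp: cand_def)
  moreover have "m ` cand g t \<noteq> {}" using cand_X[OF t] by auto
  ultimately have "Min (m ` cand g t) \<in> m ` cand g t" by (rule Min_in)
  thus ?thesis using sig_eq[OF t, of g] by (auto simp: cand_def)
qed

lemma sig_nonneg: "0 \<le> t \<Longrightarrow> 0 \<le> sig g t"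
  using sig_attained[of t g] m_nonneg by auto

lemma sig_le_mX: "0 \<le> t \<Longrightarrow> sig g t \<le> m X"
  using sig_le[of X g t] by (simp add: restr_empty S_zero)

lemma sig_anti: "0 \<le> t \<Longrightarrow> t \<le> t' \<Longrightarrow> sig g t' \<le> sig g t"
  using sig_attained[of t g] sig_le[of _ g t'] by force

lemma sig_zero: "S g \<le> t \<Longrightarrow> sig g t = 0"
  using sig_le[of "{}" g t] sig_nonneg[of t g] S_nonneg[of g] by (simp add: S_restrX m_empty)

end

lemma sum_at_most_one:
  fixes f :: "'b \<Rightarrow> real"
  assumes "finite A" "\<And>a b. a \<in> A \<Longrightarrow> b \<in> A \<Longrightarrow> P a \<Longrightarrow> P b \<Longrightarrow> a = b"
    "\<And>a. a \<in> A \<Longrightarrow> P a \<Longrightarrow> f a \<le> B" "\<And>a. a \<in> A \<Longrightarrow> \<not> P a \<Longrightarrow> f a = 0" "0 \<le> B"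
  shows "sum f A \<le> B"
proof -
  have "sum f A = sum f {a\<in>A. P a}"
    using assms by (intro sum.mono_neutral_right) auto
  moreover have "{a\<in>A. P a} = {} \<or> (\<exists>a. {a\<in>A. P a} = {a})"
    using assms(2) by blast
  moreover have "sum f {a\<in>A. P a} \<le> B"
    using calculation(2)
  proof
    assume e: "{a\<in>A. P a} = {}" show ?thesis unfolding e using assms(5) by simp
  next
    assume "\<exists>a. {a\<in>A. P a} = {a}"
    then obtain a where a: "{a\<in>A. P a} = {a}" by blast
    hence "a \<in> A" "P a" by auto
    then show ?thesis using a assms(3) by simp
  qed
  ultimately show ?thesis by simp
qed

lemma bumps_integral:
  fixes p :: real and K :: "'b set"
  assumes p: "p > 0" and K: "finite K" and ab: "\<And>k. k \<in> K \<Longrightarrow> 0 \<le> \<alpha> k \<and> \<alpha> k \<le> \<beta> k"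
  shows "integrable lborel (\<lambda>t. \<Sum>k\<in>K. a k * (indicator {\<alpha> k<..\<beta> k} t * (p * t powr (p-1))))"
    "integral\<^sup>L lborel (\<lambda>t. \<Sum>k\<in>K. a k * (indicator {\<alpha> k<..\<beta> k} t * (p * t powr (p-1))))
      = (\<Sum>k\<in>K. a k * (\<beta> k powr p - \<alpha> k powr p))"
proof -
  have ind: "indicator {\<alpha> k<..\<beta> k} t * (p * t powr (p-1)) =
      indicator {0<..\<beta> k} t * (p * t powr (p-1)) - indicator {0<..\<alpha> k} t * (p * t powr (p-1))"
    if "k \<in> K" for k t
    using ab[OF that] by (auto simp: indicator_def)
  have fi: "integrable lborel (\<lambda>t. a k * (indicator {\<alpha> k<..\<beta> k} t * (p * t powr (p-1))))
     \<and> integral\<^sup>L lborel (\<lambda>t. a k * (indicator {\<alpha> k<..\<beta> k} t * (p * t powr (p-1))))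
       = a k * (\<beta> k powr p - \<alpha> k powr p)" if k: "k \<in> K" for k
  proof -
    have i1: "integrable lborel (\<lambda>t. indicator {0<..\<beta> k} t * (p * t powr (p-1)))"
      and v1: "integral\<^sup>L lborel (\<lambda>t. indicator {0<..\<beta> k} t * (p * t powr (p-1))) = \<beta> k powr p"
      using powr_int_0b[OF p, of "\<beta> k"] ab[OF k] by auto
    have i2: "integrable lborel (\<lambda>t. indicator {0<..\<alpha> k} t * (p * t powr (p-1)))"
      and v2: "integral\<^sup>L lborel (\<lambda>t. indicator {0<..\<alpha> k} t * (p * t powr (p-1))) = \<alpha> k powr p"
      using powr_int_0b[OF p, of "\<alpha> k"] ab[OF k] by auto
    have e: "(\<lambda>t. a k * (indicator {\<alpha> k<..\<beta> k} t * (p * t powr (p-1)))) =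
       (\<lambda>t. a k * (indicator {0<..\<beta> k} t * (p * t powr (p-1)) - indicator {0<..\<alpha> k} t * (p * t powr (p-1))))"
      using ind[OF k] by simp
    show ?thesis unfolding e
      using i1 i2 v1 v2 by (simp add: Bochner_Integration.integral_diff)
  qed
  show "integrable lborel (\<lambda>t. \<Sum>k\<in>K. a k * (indicator {\<alpha> k<..\<beta> k} t * (p * t powr (p-1))))"
    using fi by (intro Bochner_Integration.integrable_sum) auto
  show "integral\<^sup>L lborel (\<lambda>t. \<Sum>k\<in>K. a k * (indicator {\<alpha> k<..\<beta> k} t * (p * t powr (p-1))))
      = (\<Sum>k\<in>K. a k * (\<beta> k powr p - \<alpha> k powr p))"
  proof -
    have "integral\<^sup>L lborel (\<lambda>t. \<Sum>k\<in>K. a k * (indicator {\<alpha> k<..\<beta> k} t * (p * t powr (p-1))))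
      = (\<Sum>k\<in>K. integral\<^sup>L lborel (\<lambda>t. a k * (indicator {\<alpha> k<..\<beta> k} t * (p * t powr (p-1)))))"
      by (rule Bochner_Integration.integral_sum) (use fi in blast)
    also have "\<dots> = (\<Sum>k\<in>K. a k * (\<beta> k powr p - \<alpha> k powr p))"
      by (rule sum.cong[OF refl]) (use fi in blast)
    finally show ?thesis .
  qed
qed

context lvl begin

definition I where "I p g = (LBINT t:{0<..}. p * t powr (p-1) * sig g t)"

lemma sig_meas: "(\<lambda>t. indicator {0<..} t *\<^sub>R (p * t powr (p-1) * sig g t)) \<in> borel_measurable lborel"
proof -
  define h where "h t = (if 0 < t then sig g t else m X)" for t
  have "mono (\<lambda>t. - h t)"
  proof
    fix x y :: real assume xy: "x \<le> y"
    show "- h x \<le> - h y"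
    proof (cases "0 < x")
      case True then show ?thesis using xy sig_anti[of x y g] by (auto simp: h_def)
    next
      case False then show ?thesis using sig_le_mX[of y g] by (auto simp: h_def)
    qed
  qed
  hence "(\<lambda>t. - h t) \<in> borel_measurable borel" by (rule borel_measurable_mono)
  hence "(\<lambda>t. - (- h t)) \<in> borel_measurable borel" by measurable
  hence hm[measurable]: "h \<in> borel_measurable borel" by simp
  have "(\<lambda>t. indicator {0<..} t *\<^sub>R (p * t powr (p-1) * h t)) \<in> borel_measurable borel" by measurable
  moreover have "(\<lambda>t. indicator {0<..} t *\<^sub>R (p * t powr (p-1) * h t)) =
     (\<lambda>t. indicator {0<..} t *\<^sub>R (p * t powr (p-1) * sig g t))"
    by (auto simp: h_def indicator_def fun_eq_iff)
  ultimately show ?thesis by (metis measurable_lborel2)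
qed

lemma I_integrable:
  assumes p: "p > 0"
  shows "integrable lborel (\<lambda>t. indicator {0<..} t *\<^sub>R (p * t powr (p-1) * sig g t))"
proof (rule Bochner_Integration.integrable_bound[OF _ sig_meas AE_I2])
  show "integrable lborel (\<lambda>t. m X * (indicator {0<..S g} t * (p * t powr (p-1))))"
    using powr_int_0b(1)[OF p S_nonneg[of g]] by simp
  fix t :: real
  have mX: "0 \<le> m X" using m_nonneg by simp
  show "norm (indicator {0<..} t *\<^sub>R (p * t powr (p-1) * sig g t))
      \<le> norm (m X * (indicator {0<..S g} t * (p * t powr (p-1))))"
  proof (cases "0 < t")
    case False then show ?thesis by simp
  next
    case True
    show ?thesis
    proof (cases "t \<le> S g")
      case False then show ?thesis using sig_zero[of g t] by simp
    next
      case True2: True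
      have "0 \<le> sig g t" "sig g t \<le> m X" using sig_nonneg sig_le_mX True by auto
      moreover have "0 \<le> p * t powr (p-1)" using p by simp
      ultimately have "p * t powr (p-1) * sig g t \<le> m X * (p * t powr (p-1))"
        by (metis mult.commute mult_right_mono)
      then show ?thesis using True True2 \<open>0 \<le> sig g t\<close> \<open>0 \<le> p * t powr (p-1)\<close> mX
        by (simp add: abs_mult abs_of_pos[OF p])
    qed
  qed
qed

lemma I_nonneg: "0 \<le> I p g" if p: "p > 0"
  unfolding I_def set_lebesgue_integral_def
  using p sig_nonneg by (intro Bochner_Integration.integral_nonneg) (auto simp: indicator_def)

lemma Lp_pow: "p > 0 \<Longrightarrow> Lp_norm X m rho p g powr p = I p g"
  unfolding Lp_norm_def I_def[symmetric] sig_def[symmetric, abs_def]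
  using I_nonneg[of p g] by (simp add: powr_powr)

lemma Lp_nonneg: "0 \<le> Lp_norm X m rho p g"
  unfolding Lp_norm_def by simp

lemma I_upper:
  assumes p: "p > 0" and L: "finite L" and b: "\<And>l. l \<in> L \<Longrightarrow> 0 \<le> b l"
    and le: "\<And>t. 0 < t \<Longrightarrow> sig g t \<le> (\<Sum>l\<in>L. a l * indicator {0<..b l} t)"
  shows "I p g \<le> (\<Sum>l\<in>L. a l * b l powr p)"
proof -
  have "I p g \<le> integral\<^sup>L lborel (\<lambda>t. \<Sum>l\<in>L. a l * (indicator {(\<lambda>_. 0) l<..b l} t * (p * t powr (p-1))))"
    unfolding I_def set_lebesgue_integral_def
  proof (rule Bochner_Integration.integral_mono[OF I_integrable[OF p] bumps_integral(1)[OF p L]])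
    show "0 \<le> (\<lambda>_. 0::real) l \<and> (\<lambda>_. 0) l \<le> b l" if "l \<in> L" for l using b that by simp
    fix t :: real
    show "indicator {0<..} t *\<^sub>R (p * t powr (p - 1) * sig g t)
       \<le> (\<Sum>l\<in>L. a l * (indicator {0<..b l} t * (p * t powr (p - 1))))"
    proof (cases "0 < t")
      case False then show ?thesis by (simp add: indicator_def)
    next
      case True
      have "p * t powr (p - 1) * sig g t \<le> p * t powr (p - 1) * (\<Sum>l\<in>L. a l * indicator {0<..b l} t)"
        using le[OF True] p by (intro mult_left_mono) auto
      also have "\<dots> = (\<Sum>l\<in>L. a l * (indicator {0<..b l} t * (p * t powr (p - 1))))"
        by (simp add: sum_distrib_left mult_ac)
      finally show ?thesis using True by simp
    qed
  qed
  also have "\<dots> = (\<Sum>l\<in>L. a l * (b l powr p - 0 powr p))"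
    using b by (intro bumps_integral(2)[OF p L]) auto
  finally show ?thesis by simp
qed

lemma I_lower:
  assumes p: "p > 0" and K: "finite K" and ab: "\<And>k. k \<in> K \<Longrightarrow> 0 \<le> \<alpha> k \<and> \<alpha> k \<le> \<beta> k"
    and le: "\<And>t. 0 < t \<Longrightarrow> (\<Sum>k\<in>K. a k * indicator {\<alpha> k<..\<beta> k} t) \<le> sig g t"
  shows "(\<Sum>k\<in>K. a k * (\<beta> k powr p - \<alpha> k powr p)) \<le> I p g"
proof -
  have "(\<Sum>k\<in>K. a k * (\<beta> k powr p - \<alpha> k powr p))
     = integral\<^sup>L lborel (\<lambda>t. \<Sum>k\<in>K. a k * (indicator {\<alpha> k<..\<beta> k} t * (p * t powr (p-1))))"
    using bumps_integral(2)[OF p K ab] by simp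
  also have "\<dots> \<le> I p g"
    unfolding I_def set_lebesgue_integral_def
  proof (rule Bochner_Integration.integral_mono[OF bumps_integral(1)[OF p K ab] I_integrable[OF p]])
    fix t :: real
    show "(\<Sum>k\<in>K. a k * (indicator {\<alpha> k<..\<beta> k} t * (p * t powr (p - 1))))
       \<le> indicator {0<..} t *\<^sub>R (p * t powr (p - 1) * sig g t)"
    proof (cases "0 < t")
      case False
      hence "indicator {\<alpha> k<..\<beta> k} t = (0::real)" if "k \<in> K" for k
        using ab[OF that] by (auto simp: indicator_def)
      then show ?thesis using False by simp
    next
      case True
      have "(\<Sum>k\<in>K. a k * (indicator {\<alpha> k<..\<beta> k} t * (p * t powr (p - 1))))
          = p * t powr (p - 1) * (\<Sum>k\<in>K. a k * indicator {\<alpha> k<..\<beta> k} t)"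
        by (simp add: sum_distrib_left mult_ac)
      also have "\<dots> \<le> p * t powr (p - 1) * sig g t"
        using le[OF True] p by (intro mult_left_mono) auto
      finally show ?thesis using True by simp
    qed
  qed
  finally show ?thesis .
qed

lemma I_dyadic:
  assumes p: "p > 0" and K: "finite K" and c: "c' > 0"
  shows "(\<Sum>k\<in>K. (c' * 2 powr real_of_int k) powr p * (1 - 2 powr (-p)) * sig g (c' * 2 powr real_of_int k))
         \<le> I p g"
proof -
  define \<beta> where "\<beta> k = c' * 2 powr real_of_int k" for k :: int
  define \<alpha> where "\<alpha> k = \<beta> k / 2" for k :: int
  have bpos: "0 < \<beta> k" for k using c by (simp add: \<beta>_def)
  have ab: "0 \<le> \<alpha> k \<and> \<alpha> k \<le> \<beta> k" for k using bpos[of k] by (simp add: \<alpha>_def)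
  have bmono: "\<beta> k \<le> \<alpha> j" if "k < j" for k j
  proof -
    have "\<beta> k * 2 = c' * 2 powr (real_of_int k + 1)" by (simp add: \<beta>_def powr_add)
    also have "\<dots> \<le> c' * 2 powr real_of_int j" using that c by (intro mult_left_mono) auto
    finally show ?thesis by (simp add: \<alpha>_def \<beta>_def)
  qed
  have "(\<Sum>k\<in>K. sig g (\<beta> k) * (\<beta> k powr p - \<alpha> k powr p)) \<le> I p g"
  proof (rule I_lower[OF p K ab])
    fix t :: real assume t: "0 < t"
    show "(\<Sum>k\<in>K. sig g (\<beta> k) * indicator {\<alpha> k<..\<beta> k} t) \<le> sig g t"
    proof (rule sum_at_most_one[OF K, where P="\<lambda>k. t \<in> {\<alpha> k<..\<beta> k}"])
      fix k j assume "k \<in> K" "j \<in> K" "t \<in> {\<alpha> k<..\<beta> k}" "t \<in> {\<alpha> j<..\<beta> j}"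
      then show "k = j" using bmono[of k j] bmono[of j k] by (cases k j rule: linorder_cases) auto
    next
      fix k assume "k \<in> K" "t \<in> {\<alpha> k<..\<beta> k}"
      then show "sig g (\<beta> k) * indicator {\<alpha> k<..\<beta> k} t \<le> sig g t"
        using sig_anti[of t "\<beta> k" g] t by auto
    qed (use sig_nonneg t in auto)
  qed
  moreover have "\<beta> k powr p - \<alpha> k powr p = \<beta> k powr p * (1 - 2 powr (-p))" for k
    using bpos[of k] by (simp add: \<alpha>_def powr_divide powr_minus_divide algebra_simps)
  ultimately show ?thesis by (simp add: \<beta>_def mult_ac)
qed

end

context lvl begin

lemma rho_restr_mono: "D \<subseteq> D' \<Longrightarrow> A \<subseteq> X \<Longrightarrow> rho (restr D g) A \<le> rho (restr D' g) A"
  unfolding rho_def restr_restr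
  by (intro mult_left_mono M_mono) auto

lemma S_restr_mono: "D \<subseteq> D' \<Longrightarrow> S (restr D g) \<le> S (restr D' g)"
  using rho_restr_mono S_le_iff S_nonneg S_ge by (meson order_trans)

lemma sig_restr_mono:
  assumes "D \<subseteq> D'" "0 \<le> t" shows "sig (restr D g) t \<le> sig (restr D' g) t"
proof -
  obtain B where B: "B \<subseteq> X" "S (restr (X - B) (restr D' g)) \<le> t" "sig (restr D' g) t = m B"
    using sig_attained[OF assms(2)] by blast
  have "S (restr (X - B) (restr D g)) \<le> S (restr (X - B) (restr D' g))"
    unfolding restr_restr using assms(1) by (intro S_restr_mono) auto
  thus ?thesis using B sig_le[of B "restr D g" t] by simp
qed

lemma I_restr_mono:
  assumes p: "p > 0" and D: "D \<subseteq> D'" shows "I p (restr D g) \<le> I p (restr D' g)"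
  unfolding I_def set_lebesgue_integral_def
proof (rule Bochner_Integration.integral_mono[OF I_integrable[OF p] I_integrable[OF p]])
  fix t :: real
  show "indicator {0<..} t *\<^sub>R (p * t powr (p - 1) * sig (restr D g) t)
     \<le> indicator {0<..} t *\<^sub>R (p * t powr (p - 1) * sig (restr D' g) t)"
    using sig_restr_mono[OF D, of t g] p by (cases "0 < t") (auto intro!: mult_left_mono)
qed

lemma Lp_restr_mono:
  assumes p: "p > 0" and D: "D \<subseteq> D'"
  shows "Lp_norm X m rho p (restr D g) \<le> Lp_norm X m rho p (restr D' g)"
proof -
  have "Lp_norm X m rho p (restr D g) powr p \<le> Lp_norm X m rho p (restr D' g) powr p"
    using I_restr_mono[OF p D] Lp_pow[OF p] by simp
  thus ?thesis using powr_le_iff_base[OF Lp_nonneg Lp_nonneg p] by simp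
qed

lemma M_restr_empty: "M (restr {} g) = 0"
  by (simp add: restr_empty M_zero)

lemma rho_pos_nonempty: "0 < rho g A \<Longrightarrow> A \<inter> {x. g x \<noteq> 0} \<noteq> {}"
  using restr_cong_set[of A g "{}"] by (auto simp: rho_def M_restr_empty)

lemma rho_shrink:
  assumes "A' \<subseteq> A" "A \<subseteq> X" "A' \<noteq> {}" "M (restr A' g) = M (restr A h)"
  shows "rho h A \<le> rho g A'"
proof -
  have "m A' > 0" using m_pos assms by auto
  hence "m A powr (-1/s) \<le> m A' powr (-1/s)"
    using m_mono[OF assms(1,2)] s_pos by (intro powr_mono2') auto
  thus ?thesis unfolding rho_def using assms(4) M_nonneg by (simp add: mult_right_mono)
qed

end

locale dec = lvl +
  fixes K1 K2 :: real
  assumes K1: "K1 > 0" and K2: "K2 > 0"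
    and M_sup: "\<And>(I :: 'a set set) D g. finite I \<Longrightarrow> (\<And>i j. i \<in> I \<Longrightarrow> j \<in> I \<Longrightarrow> i \<noteq> j \<Longrightarrow> D i \<inter> D j = {})
       \<Longrightarrow> (\<And>i. i \<in> I \<Longrightarrow> D i \<subseteq> X)
       \<Longrightarrow> (\<Sum>i\<in>I. M (restr (D i) g) powr s) \<le> K1 * M (restr (\<Union>i\<in>I. D i) g) powr s"
    and M_sub: "\<And>D1 D2 g. D1 \<inter> D2 = {} \<Longrightarrow> D1 \<subseteq> X \<Longrightarrow> D2 \<subseteq> X \<Longrightarrow>
       M (restr (D1 \<union> D2) g) powr s \<le> K2 * (M (restr D1 g) powr s + M (restr D2 g) powr s)"
begin

definition cc where "cc = min (K1 powr (-1/s)) ((2*K2) powr (-1/s))"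
definition CC where "CC = 2 powr (s+1) * K1 * K2"

lemma cc_pos: "cc > 0" using K1 K2 by (simp add: cc_def)
lemma CC_pos: "CC > 0" using K1 K2 by (simp add: CC_def)

lemma cc_pow: "cc powr s \<le> 1 / (2*K2)"
proof -
  have "cc powr s \<le> ((2*K2) powr (-1/s)) powr s"
    using cc_pos s_pos by (intro powr_mono2) (auto simp: cc_def)
  also have "\<dots> = (2*K2) powr (-1/s * s)" by (rule powr_powr)
  also have "\<dots> = (2*K2) powr (-1)" using s_pos by simp
  also have "\<dots> = 1 / (2*K2)" using K2 by (simp add: powr_minus_divide)
  finally show ?thesis .
qed

lemma cc_le: "cc \<le> K1 powr (-1/s)" by (simp add: cc_def)

definition adm where "adm g lam \<A> \<longleftrightarrow> finite \<A> \<and>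
   (\<forall>A\<in>\<A>. A \<noteq> {} \<and> A \<subseteq> supp_on X g \<and> lam < rho g A) \<and>
   (\<forall>A\<in>\<A>. \<forall>A'\<in>\<A>. A \<noteq> A' \<longrightarrow> A \<inter> A' = {})"

lemma choose_ex:
  assumes lam: "lam > 0"
  shows "\<exists>E. E \<subseteq> supp_on X (restr D f) \<and> S (restr (X - E) (restr D f)) \<le> lam \<and>
     (E \<noteq> {} \<longrightarrow> cc * lam < rho (restr D f) E) \<and>
     (S (restr D f) \<le> 2 * lam \<longrightarrow> (\<forall>B. B \<subseteq> X \<longrightarrow> S (restr (X - B) f) \<le> cc * lam \<longrightarrow> m E \<le> CC * m B))"
proof -
  define g where "g = restr D f"
  define U where "U = {\<Union>\<A> | \<A>. adm g lam \<A>}"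
  have suppX: "supp_on X g \<subseteq> X" by (auto simp: supp_on_def)
  have UX: "U \<subseteq> Pow X" unfolding U_def adm_def using suppX by blast
  hence Ufin: "finite U" using finX by (meson finite_Pow_iff finite_subset)
  have "{} \<in> U" unfolding U_def adm_def by auto
  hence Une: "card ` U \<noteq> {}" by auto
  obtain E where EU: "E \<in> U" and Emax: "\<And>E'. E' \<in> U \<Longrightarrow> card E' \<le> card E"
  proof -
    have "Max (card ` U) \<in> card ` U" using Ufin Une by (intro Max_in) auto
    then obtain E where "E \<in> U" "card E = Max (card ` U)" by auto
    moreover have "\<And>E'. E' \<in> U \<Longrightarrow> card E' \<le> Max (card ` U)" using Ufin by auto
    ultimately show ?thesis using that by metis
  qed
  obtain \<A> where adA: "adm g lam \<A>" and E: "E = \<Union>\<A>" using EU unfolding U_def by blast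
  have Afin: "finite \<A>" and Amem: "\<And>A. A \<in> \<A> \<Longrightarrow> A \<noteq> {} \<and> A \<subseteq> supp_on X g \<and> lam < rho g A"
    and Adisj: "\<And>A A'. A \<in> \<A> \<Longrightarrow> A' \<in> \<A> \<Longrightarrow> A \<noteq> A' \<Longrightarrow> A \<inter> A' = {}"
    using adA unfolding adm_def by auto
  have AX: "A \<subseteq> X" if "A \<in> \<A>" for A using Amem[OF that] suppX by auto
  have Esupp: "E \<subseteq> supp_on X g" using Amem E by auto
  hence EX: "E \<subseteq> X" using suppX by auto
  have Efin: "finite E" using EX finX finite_subset by auto
  have ii: "S (restr (X - E) g) \<le> lam"
    unfolding S_le_iff
  proof (intro conjI allI impI)
    show "0 \<le> lam" using lam by simp
    fix A assume A: "A \<subseteq> X" "A \<noteq> {}"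
    show "rho (restr (X - E) g) A \<le> lam"
    proof (rule ccontr)
      assume gt: "\<not> rho (restr (X - E) g) A \<le> lam"
      define A' where "A' = A \<inter> supp_on X g - E"
      have eqr: "restr A (restr (X - E) g) = restr A' g"
        unfolding restr_restr A'_def using A(1)
        by (intro restr_cong_set) (auto simp: supp_on_def)
      have "0 < rho (restr (X - E) g) A" using gt lam by simp
      hence "A \<inter> {x. restr (X - E) g x \<noteq> 0} \<noteq> {}" by (rule rho_pos_nonempty)
      hence A'ne: "A' \<noteq> {}" using A(1) by (auto simp: A'_def restr_def supp_on_def split: if_splits)
      have A'A: "A' \<subseteq> A" by (auto simp: A'_def)
      have "rho (restr (X - E) g) A \<le> rho g A'"
        by (rule rho_shrink[OF A'A A(1) A'ne]) (simp add: eqr)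
      hence A'gt: "lam < rho g A'" using gt by simp
      have ad2: "adm g lam (insert A' \<A>)"
        unfolding adm_def
      proof (intro conjI ballI impI)
        show "finite (insert A' \<A>)" using Afin by simp
      next
        fix B assume "B \<in> insert A' \<A>"
        then show "B \<noteq> {}" "B \<subseteq> supp_on X g" "lam < rho g B"
          using Amem A'ne A'gt by (auto simp: A'_def)
      next
        fix B B' assume B: "B \<in> insert A' \<A>" "B' \<in> insert A' \<A>" "B \<noteq> B'"
        have dA': "A' \<inter> C = {}" if "C \<in> \<A>" for C using that E by (auto simp: A'_def)
        show "B \<inter> B' = {}" using B Adisj dA' by blast
      qed
      hence "\<Union>(insert A' \<A>) \<in> U" unfolding U_def mem_Collect_eq by (intro exI[of _ "insert A' \<A>"]) simp
      hence c1: "card (A' \<union> E) \<le> card E" using Emax E by simp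
      have "A' \<inter> E = {}" unfolding A'_def by blast
      moreover have "finite A'" using finX by (rule finite_subset[rotated]) (use A'A A(1) in blast)
      ultimately have "card (A' \<union> E) = card A' + card E" using Efin by (simp add: card_Un_disjoint)
      moreover have "card A' > 0" using A'ne \<open>finite A'\<close> by (simp add: card_gt_0_iff)
      ultimately show False using c1 by simp
    qed
  qed
  have mE: "m E \<le> (\<Sum>A\<in>\<A>. m A)"
    unfolding E using m_UN[OF Afin, of "\<lambda>A. A"] AX by simp
  have gtA: "lam powr s * m A < M (restr A g) powr s" if "A \<in> \<A>" for A
    using rho_gt_iff[of A lam g] Amem[OF that] AX[OF that] lam by simp
  have iii: "cc * lam < rho g E" if Ene: "E \<noteq> {}"
  proof -
    have Ane: "\<A> \<noteq> {}" using Ene E by auto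
    have "lam powr s * m E \<le> lam powr s * (\<Sum>A\<in>\<A>. m A)" using mE by (simp add: mult_left_mono)
    also have "\<dots> = (\<Sum>A\<in>\<A>. lam powr s * m A)" by (simp add: sum_distrib_left)
    also have "\<dots> < (\<Sum>A\<in>\<A>. M (restr A g) powr s)"
      using gtA Afin Ane by (intro sum_strict_mono) auto
    also have "\<dots> \<le> K1 * M (restr (\<Union>A\<in>\<A>. A) g) powr s"
      using M_sup[OF Afin, of "\<lambda>A. A" g] Adisj AX by blast
    finally have h: "lam powr s * m E < K1 * M (restr E g) powr s" by (simp add: E)
    define l where "l = K1 powr (-1/s) * lam"
    have lpow: "l powr s = lam powr s / K1"
    proof -
      have "l powr s = (K1 powr (-1/s)) powr s * lam powr s"
        unfolding l_def using K1 lam by (intro powr_mult)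
      also have "(K1 powr (-1/s)) powr s = K1 powr (-1/s * s)" by (rule powr_powr)
      also have "\<dots> = K1 powr (-1)" using s_pos by simp
      also have "\<dots> = 1 / K1" using K1 by (simp add: powr_minus_divide)
      finally show ?thesis by simp
    qed
    have "l powr s * m E < M (restr E g) powr s" using h K1 unfolding lpow by (simp add: field_simps)
    hence "l < rho g E" using rho_gt_iff[of E l g] EX Ene K1 lam by (simp add: l_def)
    moreover have "cc * lam \<le> l" using cc_le lam by (simp add: l_def)
    ultimately show ?thesis by simp
  qed
  have iv: "m E \<le> CC * m B" if Sg: "S g \<le> 2 * lam" and B: "B \<subseteq> X" "S (restr (X - B) f) \<le> cc * lam" for B
  proof -
    have L: "lam powr s > 0" using lam by simp
    have stepA: "lam powr s * m A / 2 < K2 * M (restr (A \<inter> B) g) powr s" if A: "A \<in> \<A>" for A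
    proof -
      have h1: "lam powr s * m A < M (restr A g) powr s" by (rule gtA[OF A])
      have h2: "M (restr A g) powr s \<le> K2 * (M (restr (A - B) g) powr s + M (restr (A \<inter> B) g) powr s)"
      proof -
        have "A = (A - B) \<union> (A \<inter> B)" by auto
        hence "M (restr A g) = M (restr ((A - B) \<union> (A \<inter> B)) g)" by simp
        thus ?thesis using M_sub[of "A - B" "A \<inter> B" g] AX[OF A] by auto
      qed
      have h3: "M (restr (A - B) g) powr s \<le> (cc * lam) powr s * m A"
      proof -
        have "M (restr (A - B) g) \<le> M (restr (A - B) f)"
          unfolding g_def restr_restr
          by (intro M_mono) (use AX[OF A] in auto)
        hence "M (restr (A - B) g) powr s \<le> M (restr (A - B) f) powr s"
          using M_nonneg s_pos by (intro powr_mono2) auto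
        moreover have "rho (restr (X - B) f) A \<le> cc * lam"
          using S_ge[OF AX[OF A]] B(2) by (meson order_trans)
        hence "M (restr A (restr (X - B) f)) powr s \<le> (cc * lam) powr s * m A"
          using rho_le_iff[OF AX[OF A]] Amem[OF A] cc_pos lam by auto
        moreover have "restr A (restr (X - B) f) = restr (A - B) f"
          unfolding restr_restr by (rule arg_cong[where f="\<lambda>Z. restr Z f"]) (use AX[OF A] in blast)
        ultimately show ?thesis by simp
      qed
      have h4: "K2 * ((cc * lam) powr s * m A) \<le> lam powr s * m A / 2"
      proof -
        have "(cc * lam) powr s = cc powr s * lam powr s" using cc_pos lam by (simp add: powr_mult)
        hence "K2 * ((cc * lam) powr s * m A) = K2 * (cc powr s * lam powr s * m A)" by simp
        also have "\<dots> \<le> K2 * (1 / (2*K2) * lam powr s * m A)"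
          using cc_pow K2 L m_nonneg[OF AX[OF A]] by (intro mult_left_mono mult_right_mono) auto
        also have "\<dots> = lam powr s * m A / 2" using K2 by simp
        finally show ?thesis .
      qed
      have h5: "K2 * M (restr (A - B) g) powr s \<le> K2 * ((cc * lam) powr s * m A)"
        using h3 K2 by simp
      show ?thesis using h1 h2 h4 h5 by (simp add: algebra_simps)
    qed
    have "lam powr s * m E / 2 \<le> (\<Sum>A\<in>\<A>. lam powr s * m A / 2)"
      using mE L by (simp add: sum_divide_distrib[symmetric] sum_distrib_left[symmetric] mult_left_mono)
    also have "\<dots> \<le> (\<Sum>A\<in>\<A>. K2 * M (restr (A \<inter> B) g) powr s)"
      using stepA by (intro sum_mono) (simp add: less_imp_le)
    also have "\<dots> = K2 * (\<Sum>A\<in>\<A>. M (restr (A \<inter> B) g) powr s)" by (simp add: sum_distrib_left)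
    also have "(\<Sum>A\<in>\<A>. M (restr (A \<inter> B) g) powr s) \<le> K1 * M (restr (\<Union>A\<in>\<A>. A \<inter> B) g) powr s"
      using M_sup[OF Afin, of "\<lambda>A. A \<inter> B" g] Adisj AX by blast
    also have "(\<Union>A\<in>\<A>. A \<inter> B) = E \<inter> B" using E by auto
    also have "M (restr (E \<inter> B) g) powr s \<le> 2 powr s * lam powr s * m B"
    proof (cases "E \<inter> B = {}")
      case True then show ?thesis using M_restr_empty m_nonneg[OF B(1)] by simp
    next
      case False
      have EBX: "E \<inter> B \<subseteq> X" using EX by blast
      have "rho g (E \<inter> B) \<le> 2 * lam" using S_ge[OF EBX, of g] Sg by linarith
      hence "M (restr (E \<inter> B) g) powr s \<le> (2 * lam) powr s * m (E \<inter> B)"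
        using rho_le_iff[of "E \<inter> B" "2 * lam" g] EX False lam by auto
      also have "\<dots> \<le> (2 * lam) powr s * m B" using m_mono[of "E \<inter> B" B] B(1) by (intro mult_left_mono) auto
      finally show ?thesis using lam by (simp add: powr_mult)
    qed
    finally have "lam powr s * m E / 2 \<le> K2 * (K1 * (2 powr s * lam powr s * m B))"
      using K1 K2 by (simp add: mult_left_mono)
    hence "lam powr s * m E \<le> lam powr s * (2 powr (s+1) * K1 * K2 * m B)"
      by (simp add: powr_add algebra_simps)
    hence "m E \<le> 2 powr (s+1) * K1 * K2 * m B" using L by simp
    thus ?thesis by (simp add: CC_def)
  qed
  show ?thesis
    using Esupp ii iii iv unfolding g_def by blast
qed

end

lemma alg1: "(b::real) \<noteq> 0 \<Longrightarrow> q \<noteq> 0 \<Longrightarrow> C * b / q * ((1 / b) * z * q * w) = z * (C * w)"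
  by (simp add: field_simps)

context dec begin

definition Pch where "Pch f D lam E \<longleftrightarrow> E \<subseteq> supp_on X (restr D f) \<and> S (restr (X - E) (restr D f)) \<le> lam \<and>
     (E \<noteq> {} \<longrightarrow> cc * lam < rho (restr D f) E) \<and>
     (S (restr D f) \<le> 2 * lam \<longrightarrow> (\<forall>B. B \<subseteq> X \<longrightarrow> S (restr (X - B) f) \<le> cc * lam \<longrightarrow> m E \<le> CC * m B))"

definition chooseE where "chooseE f D lam = (SOME E. Pch f D lam E)"

lemma chooseE: "lam > 0 \<Longrightarrow> Pch f D lam (chooseE f D lam)"
  unfolding chooseE_def Pch_def by (rule someI_ex) (rule choose_ex)

definition k0 where "k0 f = (SOME k::int. S f \<le> 2 powr real_of_int k)"

lemma k0: "S f \<le> 2 powr real_of_int (k0 f)"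
proof -
  obtain n :: nat where "S f < 2 ^ n" using real_arch_pow[of 2 "S f"] by auto
  hence "S f \<le> 2 powr real_of_int (int n)" by (simp add: powr_realpow)
  thus ?thesis unfolding k0_def by (rule someI)
qed

fun Fseq where
  "Fseq f 0 = {}"
| "Fseq f (Suc n) = Fseq f n \<union> chooseE f (X - Fseq f n) (2 powr real_of_int (k0 f - int n - 1))"

declare Fseq.simps(2)[simp del]

lemma two_pow_neg: "p > 0 \<Longrightarrow> 2 powr (-p) < (1::real)"
proof -
  assume p: "p > 0"
  have "2 powr (-p) < (2::real) powr 0" using p by (subst powr_less_cancel_iff) auto
  thus ?thesis by simp
qed

definition Ek where "Ek f k = (if k0 f \<le> k then {} else chooseE f (X - Fseq f (nat (k0 f - k - 1))) (2 powr real_of_int k))"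

lemma Ek_Fseq: "Ek f (k0 f - int n - 1) = chooseE f (X - Fseq f n) (2 powr real_of_int (k0 f - int n - 1))"
  unfolding Ek_def by simp

lemma Fseq_Suc: "Fseq f (Suc n) = Fseq f n \<union> Ek f (k0 f - int n - 1)"
  by (simp add: Ek_Fseq Fseq.simps(2))

lemma Pch_step: "Pch f (X - Fseq f n) (2 powr real_of_int (k0 f - int n - 1)) (Ek f (k0 f - int n - 1))"
  unfolding Ek_Fseq by (rule chooseE) simp

lemma supp_restr: "supp_on X (restr (X - F) f) = supp_on X f - F"
  by (auto simp: supp_on_def restr_def)

lemma Fseq_inv:
  "Fseq f n \<subseteq> supp_on X f \<and> S (restr (X - Fseq f n) f) \<le> 2 powr real_of_int (k0 f - int n)"
proof (induction n)
  case 0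
  then show ?case using k0[of f] by (simp add: S_restrX)
next
  case (Suc n)
  obtain k where kdef: "k = k0 f - int n - 1" by simp
  have P: "Pch f (X - Fseq f n) (2 powr real_of_int k) (Ek f k)" using Pch_step[of f n] kdef by simp
  have FS: "Fseq f (Suc n) = Fseq f n \<union> Ek f k" using Fseq_Suc[of f n] kdef by simp
  have Es: "Ek f k \<subseteq> supp_on X f" using P unfolding Pch_def supp_restr by blast
  have eq: "restr (X - Ek f k) (restr (X - Fseq f n) f) = restr (X - Fseq f (Suc n)) f"
    unfolding restr_restr FS by (rule arg_cong[where f="\<lambda>Z. restr Z f"]) blast
  have S1: "S (restr (X - Ek f k) (restr (X - Fseq f n) f)) \<le> 2 powr real_of_int k"
    using P unfolding Pch_def by blast
  have kk: "k = k0 f - int (Suc n)" using kdef by simp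
  have "Fseq f (Suc n) \<subseteq> supp_on X f" unfolding FS using Es Suc.IH by blast
  moreover have "S (restr (X - Fseq f (Suc n)) f) \<le> 2 powr real_of_int (k0 f - int (Suc n))"
    using S1 unfolding eq unfolding kk .
  ultimately show ?case by blast
qed

lemma Fseq_supp: "Fseq f n \<subseteq> supp_on X f" using Fseq_inv by blast
lemma Fseq_S: "S (restr (X - Fseq f n) f) \<le> 2 powr real_of_int (k0 f - int n)" using Fseq_inv by blast

lemma suppX: "supp_on X f \<subseteq> X" by (auto simp: supp_on_def)

lemma Fseq_mono: "n \<le> n' \<Longrightarrow> Fseq f n \<subseteq> Fseq f n'"
  by (induction n' rule: dec_induct) (auto simp: Fseq_Suc)

lemma Ek_big: "k0 f \<le> k \<Longrightarrow> Ek f k = {}" by (simp add: Ek_def)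

lemma Ek_small: "k < k0 f \<Longrightarrow> Ek f k = Ek f (k0 f - int (nat (k0 f - k - 1)) - 1)"
  by simp

lemma Pch_k: "k < k0 f \<Longrightarrow> Pch f (X - Fseq f (nat (k0 f - k - 1))) (2 powr real_of_int k) (Ek f k)"
  using Pch_step[of f "nat (k0 f - k - 1)"] by simp

lemma Ek_supp: "Ek f k \<subseteq> supp_on X f - Fseq f (nat (k0 f - k - 1))"
proof (cases "k < k0 f")
  case True then show ?thesis using Pch_k[OF True] unfolding Pch_def supp_restr by blast
qed (simp add: Ek_def)

lemma Ek_X: "Ek f k \<subseteq> X" using Ek_supp suppX by blast

definition Fk where "Fk f k = (\<Union>l\<in>{k..}. Ek f l)"

lemma Fk_Fseq: "Fk f k = Fseq f (nat (k0 f - k))"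
proof -
  have main: "Fseq f n = (\<Union>l\<in>{k0 f - int n..}. Ek f l)" for n
  proof (induction n)
    case 0
    then show ?case using Ek_big by auto
  next
    case (Suc n)
    obtain k where kdef: "k = k0 f - int n - 1" by simp
    have FS: "Fseq f (Suc n) = Fseq f n \<union> Ek f k" using Fseq_Suc[of f n] kdef by simp
    have "{k0 f - int (Suc n)..} = insert k {k0 f - int n..}" using kdef by auto
    then show ?case unfolding FS Suc.IH by auto
  qed
  show ?thesis
  proof (cases "k \<le> k0 f")
    case True
    then show ?thesis unfolding Fk_def main by simp
  next
    case False
    then show ?thesis unfolding Fk_def using Ek_big by auto
  qed
qed

lemma Fk_X: "Fk f k \<subseteq> X" unfolding Fk_Fseq using Fseq_supp suppX by blast

lemma Ek_disj: "k \<noteq> l \<Longrightarrow> Ek f k \<inter> Ek f l = {}"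
proof -
  have *: "Ek f k \<inter> Ek f l = {}" if kl: "k < l" for k l
  proof (cases "l < k0 f")
    case True
    have "Ek f l \<subseteq> Fk f (k + 1)" unfolding Fk_def using kl by (intro UN_upper) simp
    also have "\<dots> = Fseq f (nat (k0 f - k - 1))" unfolding Fk_Fseq by (simp add: algebra_simps)
    finally show ?thesis using Ek_supp[of f k] by blast
  qed (simp add: Ek_big)
  assume "k \<noteq> l" then show ?thesis using *[of k l] *[of l k] by (cases "k < l") auto
qed

lemma S_Fk: "S (restr (X - Fk f k) f) \<le> 2 powr real_of_int k"
proof (cases "k \<le> k0 f")
  case True
  then show ?thesis using Fseq_S[of f "nat (k0 f - k)"] unfolding Fk_Fseq by simp
next
  case False
  hence "Fk f k = {}" unfolding Fk_Fseq by simp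
  hence e: "S (restr (X - Fk f k) f) = S f" using S_restrX[of f] by simp
  have mono: "2 powr real_of_int (k0 f) \<le> 2 powr real_of_int k" using False by (intro powr_mono) auto
  show ?thesis unfolding e using k0[of f] mono by linarith
qed

lemma prop_a: "Ek f k \<noteq> {} \<Longrightarrow> cc * 2 powr real_of_int k < rho (restr (X - Fk f (k + 1)) f) (Ek f k)"
proof -
  assume ne: "Ek f k \<noteq> {}"
  hence k: "k < k0 f" using Ek_big by fastforce
  have "Fk f (k + 1) = Fseq f (nat (k0 f - k - 1))" unfolding Fk_Fseq by (simp add: algebra_simps)
  thus ?thesis using Pch_k[OF k] ne unfolding Pch_def by simp
qed

lemma prop_c: "sig f (2 powr real_of_int k) \<le> m (Fk f k)"
  using sig_le[OF Fk_X S_Fk] by simp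

lemma prop_d: "m (Ek f k) \<le> CC * sig f (cc * 2 powr real_of_int k)"
proof (cases "k < k0 f")
  case False
  then show ?thesis using Ek_big[of f k] m_empty sig_nonneg[of "cc * 2 powr real_of_int k" f] cc_pos CC_pos
    by simp
next
  case True
  have t: "0 \<le> cc * 2 powr real_of_int k" using cc_pos by simp
  obtain B where B: "B \<subseteq> X" "S (restr (X - B) f) \<le> cc * 2 powr real_of_int k"
    "sig f (cc * 2 powr real_of_int k) = m B"
    using sig_attained[OF t] by blast
  have "S (restr (X - Fseq f (nat (k0 f - k - 1))) f) \<le> 2 powr real_of_int (k0 f - int (nat (k0 f - k - 1)))"
    by (rule Fseq_S)
  also have "\<dots> = 2 * 2 powr real_of_int k" using True by (simp add: powr_add algebra_simps)
  finally have "S (restr (X - Fseq f (nat (k0 f - k - 1))) f) \<le> 2 * 2 powr real_of_int k" .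
  then show ?thesis using Pch_k[OF True] B unfolding Pch_def by simp
qed

definition Lset where "Lset f = {k. Ek f k \<noteq> {}}"

lemma Lset_fin: "finite (Lset f)"
proof -
  have "inj_on (Ek f) (Lset f)"
  proof
    fix k l assume "k \<in> Lset f" "l \<in> Lset f" "Ek f k = Ek f l"
    thus "k = l" using Ek_disj[of k l f] by (auto simp: Lset_def)
  qed
  moreover have "Ek f ` Lset f \<subseteq> Pow X" using Ek_X by auto
  ultimately show ?thesis using finX by (meson finite_Pow_iff finite_subset inj_on_finite)
qed

lemma Ek_union: "(\<Union>k. Ek f k) = supp_on X f"
proof
  show "(\<Union>k. Ek f k) \<subseteq> supp_on X f" using Ek_supp by blast
next
  show "supp_on X f \<subseteq> (\<Union>k. Ek f k)"
  proof
    fix x assume x: "x \<in> supp_on X f"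
    hence xX: "x \<in> X" and fx: "f x \<noteq> 0" by (auto simp: supp_on_def)
    have r: "0 < rho f {x}"
      unfolding rho_def using M_pos[of x f, OF xX fx] m_pos[of "{x}"] xX by simp
    define k where "k = min (k0 f - 1) (\<lfloor>log 2 (rho f {x})\<rfloor> - 1)"
    have "2 powr real_of_int k \<le> 2 powr (log 2 (rho f {x}) - 1)"
      unfolding k_def by (intro powr_mono) linarith+
    also have "\<dots> = rho f {x} / 2" using r by (simp add: powr_diff)
    finally have klt: "2 powr real_of_int k < rho f {x}" using r by simp
    show "x \<in> (\<Union>k. Ek f k)"
    proof (rule ccontr)
      assume "x \<notin> (\<Union>k. Ek f k)"
      hence "x \<notin> Fk f k" unfolding Fk_def by blast
      hence "restr {x} (restr (X - Fk f k) f) = restr {x} f"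
        unfolding restr_restr using xX by (intro arg_cong[where f="\<lambda>Z. restr Z f"]) blast
      hence "rho (restr (X - Fk f k) f) {x} = rho f {x}" by (simp add: rho_def)
      moreover have "rho (restr (X - Fk f k) f) {x} \<le> 2 powr real_of_int k"
        using S_ge[of "{x}" "restr (X - Fk f k) f"] S_Fk[of f k] xX by simp
      ultimately show False using klt by simp
    qed
  qed
qed

lemma Fk_sum: "m (Fk f k) \<le> (\<Sum>l\<in>Lset f. if k \<le> l then m (Ek f l) else 0)"
proof -
  have "Fk f k = (\<Union>l\<in>{l\<in>Lset f. k \<le> l}. Ek f l)" unfolding Fk_def Lset_def by auto
  hence "m (Fk f k) \<le> (\<Sum>l\<in>{l\<in>Lset f. k \<le> l}. m (Ek f l))"
    using m_UN[of "{l\<in>Lset f. k \<le> l}" "Ek f"] Lset_fin Ek_X by simp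
  also have "\<dots> = (\<Sum>l\<in>Lset f. if k \<le> l then m (Ek f l) else 0)"
    using Lset_fin by (simp add: sum.If_cases Int_def conj_commute)
  finally show ?thesis .
qed

lemma N1: assumes p: "p > 0"
  shows "I p f \<le> 2 powr p * (\<Sum>l\<in>Lset f. 2 powr (real_of_int l * p) * m (Ek f l))"
proof -
  have "I p f \<le> (\<Sum>l\<in>Lset f. m (Ek f l) * (2 powr real_of_int (l + 1)) powr p)"
  proof (rule I_upper[OF p Lset_fin])
    fix t :: real assume t: "0 < t"
    define k where "k = \<lfloor>log 2 t\<rfloor>"
    have k1: "2 powr real_of_int k \<le> t"
    proof -
      have "2 powr real_of_int k \<le> 2 powr (log 2 t)" unfolding k_def by (intro powr_mono) auto
      also have "\<dots> = t" using t by simp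
      finally show ?thesis .
    qed
    have k2: "t < 2 powr real_of_int (k + 1)"
    proof -
      have "log 2 t < real_of_int (k + 1)" unfolding k_def by linarith
      thus ?thesis using t by (simp add: log_less_iff)
    qed
    have "sig f t \<le> sig f (2 powr real_of_int k)" using sig_anti[OF _ k1] by simp
    also have "\<dots> \<le> m (Fk f k)" by (rule prop_c)
    also have "\<dots> \<le> (\<Sum>l\<in>Lset f. if k \<le> l then m (Ek f l) else 0)" by (rule Fk_sum)
    also have "\<dots> \<le> (\<Sum>l\<in>Lset f. m (Ek f l) * indicator {0<..2 powr real_of_int (l + 1)} t)"
    proof (rule sum_mono)
      fix l assume "l \<in> Lset f"
      show "(if k \<le> l then m (Ek f l) else 0) \<le> m (Ek f l) * indicator {0<..2 powr real_of_int (l + 1)} t"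
      proof (cases "k \<le> l")
        case True
        have mono: "2 powr real_of_int (k + 1) \<le> 2 powr real_of_int (l + 1)" using True by (intro powr_mono) auto
        have "t \<le> 2 powr real_of_int (l + 1)" using k2 mono by linarith
        then show ?thesis using True t by (simp add: indicator_def)
      next
        case False then show ?thesis using m_nonneg[OF Ek_X] by (simp add: indicator_def)
      qed
    qed
    finally show "sig f t \<le> (\<Sum>l\<in>Lset f. m (Ek f l) * indicator {0<..2 powr real_of_int (l + 1)} t)" .
  qed simp
  also have "\<dots> = (\<Sum>l\<in>Lset f. 2 powr p * (2 powr (real_of_int l * p) * m (Ek f l)))"
  proof (rule sum.cong[OF refl])
    fix l
    have "(2 powr real_of_int (l+1)) powr p = 2 powr (real_of_int (l+1) * p)" by (rule powr_powr)
    also have "\<dots> = 2 powr (p + real_of_int l * p)" by (simp add: algebra_simps)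
    also have "\<dots> = 2 powr p * 2 powr (real_of_int l * p)" by (rule powr_add)
    finally show "m (Ek f l) * (2 powr real_of_int (l + 1)) powr p = 2 powr p * (2 powr (real_of_int l * p) * m (Ek f l))"
      by simp
  qed
  also have "\<dots> = 2 powr p * (\<Sum>l\<in>Lset f. 2 powr (real_of_int l * p) * m (Ek f l))"
    by (simp add: sum_distrib_left)
  finally show ?thesis .
qed

definition C2 where "C2 p = CC * cc powr (-p) / (1 - 2 powr (-p))"

lemma C2_pos: "p > 0 \<Longrightarrow> C2 p > 0"
  unfolding C2_def using CC_pos cc_pos two_pow_neg[of p]
  by (intro divide_pos_pos mult_pos_pos) auto

lemma N2: assumes p: "p > 0"
  shows "(\<Sum>l\<in>Lset f. 2 powr (real_of_int l * p) * m (Ek f l)) \<le> C2 p * I p f"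
proof -
  have q: "0 < 1 - 2 powr (-p)" using two_pow_neg[OF p] by simp
  have "(\<Sum>l\<in>Lset f. 2 powr (real_of_int l * p) * m (Ek f l))
     \<le> (\<Sum>l\<in>Lset f. 2 powr (real_of_int l * p) * (CC * sig f (cc * 2 powr real_of_int l)))"
    using prop_d by (intro sum_mono mult_left_mono) auto
  also have "\<dots> = C2 p * (\<Sum>k\<in>Lset f. (cc * 2 powr real_of_int k) powr p * (1 - 2 powr (-p)) * sig f (cc * 2 powr real_of_int k))"
  proof -
    have b0: "cc powr (-p) \<noteq> 0" using cc_pos by simp
    have a: "cc powr p = 1 / cc powr (-p)" using cc_pos by (simp add: powr_minus_divide)
    have t: "C2 p * ((cc * 2 powr real_of_int k) powr p * (1 - 2 powr (-p)) * sig f (cc * 2 powr real_of_int k))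
       = 2 powr (real_of_int k * p) * (CC * sig f (cc * 2 powr real_of_int k))" for k
    proof -
      have "(cc * 2 powr real_of_int k) powr p = cc powr p * 2 powr (real_of_int k * p)"
        using cc_pos by (simp add: powr_mult powr_powr)
      hence "C2 p * ((cc * 2 powr real_of_int k) powr p * (1 - 2 powr (-p)) * sig f (cc * 2 powr real_of_int k))
        = CC * cc powr (-p) / (1 - 2 powr (-p)) * ((1 / cc powr (-p)) * 2 powr (real_of_int k * p) * (1 - 2 powr (-p)) * sig f (cc * 2 powr real_of_int k))"
        unfolding C2_def a by simp
      also have "\<dots> = 2 powr (real_of_int k * p) * (CC * sig f (cc * 2 powr real_of_int k))"
        using b0 q by (intro alg1) auto
      finally show ?thesis .
    qed
    show ?thesis unfolding sum_distrib_left t ..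
  qed
  also have "\<dots> \<le> C2 p * I p f"
    using I_dyadic[OF p Lset_fin cc_pos] C2_pos[OF p] by (intro mult_left_mono) auto
  finally show ?thesis .
qed

end

lemma two_pow_neg': "p > 0 \<Longrightarrow> 2 powr (-p) < (1::real)"
proof -
  assume p: "p > 0"
  have "2 powr (-p) < (2::real) powr 0" using p by (subst powr_less_cancel_iff) auto
  thus ?thesis by simp
qed

context lvl begin

lemma I_pos_point:
  assumes x: "x \<in> X" and gx: "g x \<noteq> 0" and p: "p > 0"
  shows "0 < I p (restr {x} g)"
proof -
  define h where "h = restr {x} g"
  have r: "0 < rho h {x}"
    unfolding rho_def h_def restr_restr using M_pos[of x g, OF x gx] m_pos[of "{x}"] x by simp
  define t0 where "t0 = rho h {x} / 2"
  have t0: "0 < t0" "t0 < rho h {x}" using r by (auto simp: t0_def)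
  obtain B where B: "B \<subseteq> X" "S (restr (X - B) h) \<le> t0" "sig h t0 = m B"
    using sig_attained[of t0 h] t0 by auto
  have "x \<in> B"
  proof (rule ccontr)
    assume "x \<notin> B"
    hence "restr {x} (restr (X - B) h) = restr {x} h"
      unfolding restr_restr using x by (intro arg_cong[where f="\<lambda>Z. restr Z g"] arg_cong[where f="\<lambda>Z. restr Z h"]) blast
    hence "rho (restr (X - B) h) {x} = rho h {x}" by (simp add: rho_def)
    moreover have "rho (restr (X - B) h) {x} \<le> S (restr (X - B) h)" using S_ge x by simp
    ultimately show False using t0 B(2) by simp
  qed
  hence sp: "0 < sig h t0" using B m_pos[of B] by auto
  have "(\<Sum>k\<in>{()}. sig h t0 * (t0 powr p - 0 powr p)) \<le> I p h"
  proof (rule I_lower[OF p])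
    fix t :: real assume t: "0 < t"
    show "(\<Sum>k\<in>{()}. sig h t0 * indicator {0<..t0} t) \<le> sig h t"
      using sig_anti[of t t0 h] t sig_nonneg[of t h] by (auto simp: indicator_def)
  qed (use t0 in auto)
  moreover have "0 < sig h t0 * (t0 powr p - 0 powr p)" using sp t0 p by simp
  ultimately show ?thesis unfolding h_def by simp
qed

lemma Lp_pos_point:
  assumes x: "x \<in> X" and gx: "g x \<noteq> 0" and p: "p > 0"
  shows "0 < Lp_norm X m rho p (restr {x} g)"
proof -
  have "0 < Lp_norm X m rho p (restr {x} g) powr p" using Lp_pow[OF p] I_pos_point[of x g, OF x gx p] by simp
  thus ?thesis using Lp_nonneg[of p "restr {x} g"] by (cases "Lp_norm X m rho p (restr {x} g) = 0") auto
qed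

lemma I_zero: "p > 0 \<Longrightarrow> I p (\<lambda>_. 0) = 0"
proof -
  assume p: "p > 0"
  have "\<And>t. 0 < t \<Longrightarrow> sig (\<lambda>_. 0) t = 0" using sig_zero S_zero by simp
  hence "(\<lambda>t. indicator {0<..} t *\<^sub>R (p * t powr (p-1) * sig (\<lambda>_. 0) t)) = (\<lambda>t. 0::real)"
    by (auto simp: indicator_def fun_eq_iff)
  thus ?thesis unfolding I_def set_lebesgue_integral_def by simp
qed

lemma Lp_zero: "p > 0 \<Longrightarrow> Lp_norm X m rho p (\<lambda>_. 0) = 0"
  using Lp_pow[of p "\<lambda>_. 0"] I_zero[of p] Lp_nonneg[of p "\<lambda>_. 0"] by simp

lemma dyadic_sum:
  assumes p: "p > 0" and K: "finite K" and c: "c' > 0"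
  shows "(\<Sum>k\<in>K. 2 powr (real_of_int k * p) * sig g (c' * 2 powr real_of_int k))
     \<le> c' powr (-p) / (1 - 2 powr (-p)) * I p g"
proof -
  have q: "0 < 1 - 2 powr (-p)" using two_pow_neg'[OF p] by simp
  have b0: "c' powr (-p) \<noteq> 0" using c by simp
  have a: "c' powr p = 1 / c' powr (-p)" using c by (simp add: powr_minus_divide)
  have t: "c' powr (-p) / (1 - 2 powr (-p)) * ((c' * 2 powr real_of_int k) powr p * (1 - 2 powr (-p)) * sig g (c' * 2 powr real_of_int k))
       = 2 powr (real_of_int k * p) * (1 * sig g (c' * 2 powr real_of_int k))" for k
  proof -
    have "(c' * 2 powr real_of_int k) powr p = c' powr p * 2 powr (real_of_int k * p)"
      using c by (simp add: powr_mult powr_powr)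
    hence "c' powr (-p) / (1 - 2 powr (-p)) * ((c' * 2 powr real_of_int k) powr p * (1 - 2 powr (-p)) * sig g (c' * 2 powr real_of_int k))
      = 1 * c' powr (-p) / (1 - 2 powr (-p)) * ((1 / c' powr (-p)) * 2 powr (real_of_int k * p) * (1 - 2 powr (-p)) * sig g (c' * 2 powr real_of_int k))"
      unfolding a by simp
    also have "\<dots> = 2 powr (real_of_int k * p) * (1 * sig g (c' * 2 powr real_of_int k))"
      using b0 q by (intro alg1) auto
    finally show ?thesis .
  qed
  have "(\<Sum>k\<in>K. 2 powr (real_of_int k * p) * sig g (c' * 2 powr real_of_int k))
     = c' powr (-p) / (1 - 2 powr (-p)) * (\<Sum>k\<in>K. (c' * 2 powr real_of_int k) powr p * (1 - 2 powr (-p)) * sig g (c' * 2 powr real_of_int k))"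
    unfolding sum_distrib_left t by simp
  also have "\<dots> \<le> c' powr (-p) / (1 - 2 powr (-p)) * I p g"
    using I_dyadic[OF p K c] q c by (intro mult_left_mono) auto
  finally show ?thesis .
qed

end

locale addl = lvl +
  fixes phi :: "'a \<Rightarrow> real \<Rightarrow> real"
  assumes phi_nonneg: "\<And>x y. phi x y \<ge> 0" and phi_zero: "\<And>x. phi x 0 = 0"
    and M_add: "\<And>D g. D \<subseteq> X \<Longrightarrow> M (restr D g) powr s = (\<Sum>x\<in>D. phi x (g x))"
begin

lemma M_add': "E \<subseteq> X \<Longrightarrow> (\<And>x. x \<in> E \<Longrightarrow> G x = g x) \<Longrightarrow> M (restr E G) powr s = (\<Sum>x\<in>E. phi x (g x))"
  using M_add[of E G] by simp

end

sublocale addl \<subseteq> dec X m M s 1 1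
proof unfold_locales
  fix I :: "'a set set" and D :: "'a set \<Rightarrow> 'a set" and g
  assume I: "finite I" and dj: "\<And>i j. i \<in> I \<Longrightarrow> j \<in> I \<Longrightarrow> i \<noteq> j \<Longrightarrow> D i \<inter> D j = {}"
    and DX: "\<And>i. i \<in> I \<Longrightarrow> D i \<subseteq> X"
  have "(\<Sum>i\<in>I. M (restr (D i) g) powr s) = (\<Sum>i\<in>I. \<Sum>x\<in>D i. phi x (g x))"
    using M_add DX by simp
  also have "\<dots> = (\<Sum>x\<in>(\<Union>i\<in>I. D i). phi x (g x))"
    using I DX dj finX by (subst sum.UNION_disjoint) (auto intro: finite_subset)
  also have "\<dots> = M (restr (\<Union>i\<in>I. D i) g) powr s" using M_add DX by (subst M_add) auto
  finally show "(\<Sum>i\<in>I. M (restr (D i) g) powr s) \<le> 1 * M (restr (\<Union>i\<in>I. D i) g) powr s" by simp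
next
  fix D1 D2 g assume "D1 \<inter> D2 = {}" "D1 \<subseteq> X" "D2 \<subseteq> X"
  moreover have "finite D1" "finite D2" using finX \<open>D1 \<subseteq> X\<close> \<open>D2 \<subseteq> X\<close> by (auto intro: finite_subset)
  ultimately show "M (restr (D1 \<union> D2) g) powr s \<le> 1 * (M (restr D1 g) powr s + M (restr D2 g) powr s)"
    using M_add by (simp add: sum.union_disjoint)
qed simp_all

context dec begin

lemma Ek_Fk_disj: "Ek f k \<inter> Fk f (k + 1) = {}"
proof -
  have "Fk f (k + 1) = Fseq f (nat (k0 f - k - 1))" unfolding Fk_Fseq by (simp add: algebra_simps)
  thus ?thesis using Ek_supp[of f k] by blast
qed

lemma Ek_restr: "Ek (restr D g) k \<subseteq> D \<inter> X"
  using Ek_supp[of "restr D g" k] by (auto simp: supp_on_def restr_def split: if_splits)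

end

context addl begin

lemma sig_split:
  assumes D: "D1 \<inter> D2 = {}" "D1 \<subseteq> X" "D2 \<subseteq> X" and t: "0 \<le> t"
  shows "sig (restr (D1 \<union> D2) g) (2 powr (1/s) * t) \<le> sig (restr D1 g) t + sig (restr D2 g) t"
proof -
  obtain B1 where B1: "B1 \<subseteq> X" "S (restr (X - B1) (restr D1 g)) \<le> t" "sig (restr D1 g) t = m B1"
    using sig_attained[OF t] by blast
  obtain B2 where B2: "B2 \<subseteq> X" "S (restr (X - B2) (restr D2 g)) \<le> t" "sig (restr D2 g) t = m B2"
    using sig_attained[OF t] by blast
  define B where "B = B1 \<union> B2"
  have BX: "B \<subseteq> X" using B1 B2 by (auto simp: B_def)
  have tt: "(2 powr (1/s) * t) powr s = 2 * t powr s"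
  proof -
    have "(2 powr (1/s) * t) powr s = (2 powr (1/s)) powr s * t powr s" using t by (intro powr_mult)
    also have "(2 powr (1/s)) powr s = 2 powr (1/s * s)" by (rule powr_powr)
    also have "\<dots> = 2" using s_pos by simp
    finally show ?thesis .
  qed
  have "S (restr (X - B) (restr (D1 \<union> D2) g)) \<le> 2 powr (1/s) * t"
    unfolding S_le_iff
  proof (intro conjI allI impI)
    show "0 \<le> 2 powr (1/s) * t" using t by simp
    fix A assume A: "A \<subseteq> X" "A \<noteq> {}"
    define G where "G = restr (X - B) (restr (D1 \<union> D2) g)"
    define G1 where "G1 = restr (X - B1) (restr D1 g)"
    define G2 where "G2 = restr (X - B2) (restr D2 g)"
    have "M (restr A G) powr s = (\<Sum>x\<in>A. phi x (G x))" using M_add A by simp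
    also have "\<dots> \<le> (\<Sum>x\<in>A. phi x (G1 x) + phi x (G2 x))"
    proof (rule sum_mono)
      fix x assume "x \<in> A"
      show "phi x (G x) \<le> phi x (G1 x) + phi x (G2 x)"
        using D(1) phi_nonneg[of x "G1 x"] phi_nonneg[of x "G2 x"] phi_zero[of x]
        by (auto simp: G_def G1_def G2_def B_def restr_def)
    qed
    also have "\<dots> = M (restr A G1) powr s + M (restr A G2) powr s"
      using M_add A by (simp add: sum.distrib)
    also have "\<dots> \<le> t powr s * m A + t powr s * m A"
    proof -
      have "rho G1 A \<le> t" using S_ge[OF A(1), of G1] B1(2) unfolding G1_def by linarith
      hence 1: "M (restr A G1) powr s \<le> t powr s * m A" using rho_le_iff[OF A t] by simp
      have "rho G2 A \<le> t" using S_ge[OF A(1), of G2] B2(2) unfolding G2_def by linarith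
      hence 2: "M (restr A G2) powr s \<le> t powr s * m A" using rho_le_iff[OF A t] by simp
      show ?thesis using 1 2 by linarith
    qed
    also have "\<dots> = (2 powr (1/s) * t) powr s * m A" unfolding tt by simp
    finally show "rho (restr (X - B) (restr (D1 \<union> D2) g)) A \<le> 2 powr (1/s) * t"
      using rho_le_iff[OF A, of "2 powr (1/s) * t"] t unfolding G_def by simp
  qed
  hence "sig (restr (D1 \<union> D2) g) (2 powr (1/s) * t) \<le> m B" by (rule sig_le[OF BX])
  also have "\<dots> \<le> m B1 + m B2" unfolding B_def using B1 B2 by (intro m_un) auto
  finally show ?thesis using B1 B2 by simp
qed

definition c2' where "c2' = cc * 2 powr (-1/s)"
definition KB where "KB q = 2 powr q * CC * (c2' powr (-q) / (1 - 2 powr (-q)))"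

lemma c2'_pos: "c2' > 0" using cc_pos by (simp add: c2'_def)

lemma KB_pos: "q > 0 \<Longrightarrow> KB q > 0"
  unfolding KB_def using CC_pos c2'_pos two_pow_neg'[of q]
  by (intro mult_pos_pos divide_pos_pos) auto

lemma SUB_I:
  assumes q: "q > 0" and D: "D1 \<inter> D2 = {}" "D1 \<subseteq> X" "D2 \<subseteq> X"
  shows "I q (restr (D1 \<union> D2) g) \<le> KB q * (I q (restr D1 g) + I q (restr D2 g))"
proof -
  define h where "h = restr (D1 \<union> D2) g"
  define L where "L = Lset h"
  have Lfin: "finite L" unfolding L_def by (rule Lset_fin)
  have cpos: "0 < c2' powr (-q) / (1 - 2 powr (-q))" using c2'_pos two_pow_neg'[OF q] by simp
  have e: "cc * 2 powr real_of_int k = 2 powr (1/s) * (c2' * 2 powr real_of_int k)" for k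
  proof -
    have "2 powr (1/s) * 2 powr (-1/s) = (1::real)" by (simp add: powr_add[symmetric])
    thus ?thesis unfolding c2'_def by (metis mult.assoc mult.commute mult_1_left)
  qed
  have "I q h \<le> 2 powr q * (\<Sum>k\<in>L. 2 powr (real_of_int k * q) * m (Ek h k))"
    unfolding L_def by (rule N1[OF q])
  also have "(\<Sum>k\<in>L. 2 powr (real_of_int k * q) * m (Ek h k))
      \<le> (\<Sum>k\<in>L. 2 powr (real_of_int k * q) * (CC * sig h (cc * 2 powr real_of_int k)))"
    using prop_d by (intro sum_mono mult_left_mono) auto
  also have "\<dots> \<le> (\<Sum>k\<in>L. 2 powr (real_of_int k * q) * (CC * (sig (restr D1 g) (c2' * 2 powr real_of_int k)
        + sig (restr D2 g) (c2' * 2 powr real_of_int k))))"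
  proof (rule sum_mono)
    fix k
    have "sig h (cc * 2 powr real_of_int k) \<le> sig (restr D1 g) (c2' * 2 powr real_of_int k)
        + sig (restr D2 g) (c2' * 2 powr real_of_int k)"
      unfolding e h_def using c2'_pos by (intro sig_split[OF D]) simp
    thus "2 powr (real_of_int k * q) * (CC * sig h (cc * 2 powr real_of_int k))
       \<le> 2 powr (real_of_int k * q) * (CC * (sig (restr D1 g) (c2' * 2 powr real_of_int k)
        + sig (restr D2 g) (c2' * 2 powr real_of_int k)))"
      using CC_pos by (intro mult_left_mono) auto
  qed
  also have "\<dots> = CC * ((\<Sum>k\<in>L. 2 powr (real_of_int k * q) * sig (restr D1 g) (c2' * 2 powr real_of_int k))
      + (\<Sum>k\<in>L. 2 powr (real_of_int k * q) * sig (restr D2 g) (c2' * 2 powr real_of_int k)))"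
    by (simp add: sum_distrib_left sum.distrib algebra_simps)
  also have "\<dots> \<le> CC * (c2' powr (-q) / (1 - 2 powr (-q)) * I q (restr D1 g)
      + c2' powr (-q) / (1 - 2 powr (-q)) * I q (restr D2 g))"
    using dyadic_sum[OF q Lfin c2'_pos] CC_pos by (intro mult_left_mono add_mono) auto
  finally have fin: "I q h \<le> 2 powr q * (CC * (c2' powr (-q) / (1 - 2 powr (-q)) * I q (restr D1 g)
      + c2' powr (-q) / (1 - 2 powr (-q)) * I q (restr D2 g)))"
    by (simp add: mult_left_mono)
  define a where "a = c2' powr (-q) / (1 - 2 powr (-q))"
  have KBa: "KB q = 2 powr q * CC * a" unfolding KB_def a_def by simp
  have "2 powr q * (CC * (a * I q (restr D1 g) + a * I q (restr D2 g))) = KB q * (I q (restr D1 g) + I q (restr D2 g))"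
    unfolding KBa by (simp add: algebra_simps)
  thus ?thesis using fin unfolding h_def a_def[symmetric] by simp
qed

end

context addl begin

definition C0 where "C0 = (LEAST n::nat. 2 / cc powr s < (2 powr s) ^ n)"

lemma C0_prop: "2 / cc powr s < 2 powr (s * real C0)"
proof -
  have "(2::real) powr 0 < 2 powr s" using s_pos by (subst powr_less_cancel_iff) auto
  hence "1 < (2::real) powr s" by simp
  hence ex: "\<exists>n::nat. 2 / cc powr s < (2 powr s) ^ n" by (rule real_arch_pow)
  have "2 / cc powr s < (2 powr s) ^ C0" unfolding C0_def by (rule LeastI_ex[OF ex])
  also have "(2 powr s) ^ C0 = 2 powr (s * real C0)"
    by (simp add: powr_realpow[symmetric] powr_powr)
  finally show ?thesis .
qed

lemma lvl_bound: "(2 powr real_of_int (k - int C0)) powr s \<le> (cc * 2 powr real_of_int k) powr s / 2"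
proof -
  define a where "a = 2 powr (real_of_int k * s)"
  define b where "b = 2 powr (s * real C0)"
  define c where "c = cc powr s"
  have a0: "a > 0" and b0: "b > 0" and c0: "c > 0" using cc_pos by (auto simp: a_def b_def c_def)
  have "(2 powr real_of_int (k - int C0)) powr s = 2 powr (real_of_int (k - int C0) * s)" by (rule powr_powr)
  also have "\<dots> = 2 powr (real_of_int k * s - s * real C0)" by (simp add: algebra_simps)
  also have "\<dots> = a / b" unfolding a_def b_def by (rule powr_diff)
  finally have l: "(2 powr real_of_int (k - int C0)) powr s = a / b" .
  have r: "(cc * 2 powr real_of_int k) powr s = c * a"
    unfolding a_def c_def using cc_pos by (simp add: powr_mult powr_powr)
  have "2 / c < b" using C0_prop unfolding b_def c_def .
  hence "2 < c * b" using c0 by (simp add: field_simps)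
  hence "2 * a < c * b * a" using a0 by simp
  hence "a / b \<le> c * a / 2" using b0 by (simp add: field_simps)
  thus ?thesis unfolding l r .
qed

lemma mE_bound:
  assumes D: "D \<subseteq> D'" "D' \<subseteq> X" and k: "k \<in> Lset (restr D g)"
  shows "(cc * 2 powr real_of_int k) powr s * m (Ek (restr D g) k)
     \<le> 2 * (\<Sum>x\<in>Ek (restr D g) k \<inter> Fk (restr D' g) (k - int C0). phi x (g x))"
proof -
  define gi where "gi = restr D g"
  define h where "h = restr D' g"
  define E where "E = Ek gi k"
  define F where "F = Fk h (k - int C0)"
  have Ene: "E \<noteq> {}" using k by (simp add: E_def gi_def Lset_def)
  have ED: "E \<subseteq> D \<inter> X" unfolding E_def gi_def by (rule Ek_restr)
  have EX: "E \<subseteq> X" using ED by blast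
  have Efin: "finite E" using EX finX by (auto intro: finite_subset)
  have l0: "0 \<le> cc * 2 powr real_of_int k" using cc_pos by simp
  have a: "cc * 2 powr real_of_int k < rho (restr (X - Fk gi (k + 1)) gi) E"
    using prop_a[of gi k] Ene by (simp add: E_def)
  hence a': "(cc * 2 powr real_of_int k) powr s * m E < M (restr E (restr (X - Fk gi (k + 1)) gi)) powr s"
    using rho_gt_iff[OF EX Ene l0] by simp
  have "M (restr E (restr (X - Fk gi (k + 1)) gi)) powr s = (\<Sum>x\<in>E. phi x (g x))"
  proof (rule M_add'[OF EX])
    fix x assume x: "x \<in> E"
    hence "x \<notin> Fk gi (k + 1)" using Ek_Fk_disj[of gi k] by (auto simp: E_def)
    thus "restr (X - Fk gi (k + 1)) gi x = g x" using x ED by (auto simp: restr_def gi_def)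
  qed
  hence a'': "(cc * 2 powr real_of_int k) powr s * m E < (\<Sum>x\<in>E. phi x (g x))" using a' by simp
  have b: "M (restr E (restr (X - F) h)) powr s \<le> (2 powr real_of_int (k - int C0)) powr s * m E"
  proof -
    have "rho (restr (X - F) h) E \<le> 2 powr real_of_int (k - int C0)"
      using S_ge[OF EX, of "restr (X - F) h"] S_Fk[of h "k - int C0"] unfolding F_def by linarith
    thus ?thesis using rho_le_iff[OF EX Ene] by simp
  qed
  have b': "M (restr E (restr (X - F) h)) powr s = (\<Sum>x\<in>E. if x \<in> F then 0 else phi x (g x))"
  proof -
    have "M (restr E (restr (X - F) h)) powr s = (\<Sum>x\<in>E. phi x (restr (X - F) h x))"
      using M_add[OF EX] by simp
    also have "\<dots> = (\<Sum>x\<in>E. if x \<in> F then 0 else phi x (g x))"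
      using ED D(1) phi_zero by (intro sum.cong) (auto simp: restr_def h_def)
    finally show ?thesis .
  qed
  have split: "(\<Sum>x\<in>E. phi x (g x)) = (\<Sum>x\<in>E \<inter> F. phi x (g x)) + (\<Sum>x\<in>E. if x \<in> F then 0 else phi x (g x))"
  proof -
    have "(\<Sum>x\<in>E. phi x (g x)) = (\<Sum>x\<in>E. (if x \<in> F then phi x (g x) else 0) + (if x \<in> F then 0 else phi x (g x)))"
      by (intro sum.cong) auto
    also have "\<dots> = (\<Sum>x\<in>E. if x \<in> F then phi x (g x) else 0) + (\<Sum>x\<in>E. if x \<in> F then 0 else phi x (g x))"
      by (rule sum.distrib)
    also have "(\<Sum>x\<in>E. if x \<in> F then phi x (g x) else 0) = (\<Sum>x\<in>E \<inter> F. phi x (g x))"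
      using Efin by (simp add: sum.inter_restrict)
    finally show ?thesis .
  qed
  have mE0: "0 \<le> m E" using m_nonneg[OF EX] .
  have c: "(2 powr real_of_int (k - int C0)) powr s * m E \<le> (cc * 2 powr real_of_int k) powr s / 2 * m E"
    using lvl_bound mE0 by (intro mult_right_mono) auto
  have "(cc * 2 powr real_of_int k) powr s * m E < (\<Sum>x\<in>E \<inter> F. phi x (g x)) + (cc * 2 powr real_of_int k) powr s / 2 * m E"
    using a'' split b b' c by linarith
  hence "(cc * 2 powr real_of_int k) powr s * m E \<le> 2 * (\<Sum>x\<in>E \<inter> F. phi x (g x))" by simp
  thus ?thesis unfolding E_def F_def gi_def h_def .
qed

lemma Eh_bound:
  assumes D': "D' \<subseteq> X" and j: "j \<in> Lset (restr D' g)"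
  shows "(\<Sum>x\<in>Ek (restr D' g) j. phi x (g x)) \<le> 2 powr (real_of_int (j + 1) * s) * m (Ek (restr D' g) j)"
proof -
  define h where "h = restr D' g"
  define E where "E = Ek h j"
  have Ene: "E \<noteq> {}" using j by (simp add: E_def h_def Lset_def)
  have ED: "E \<subseteq> D' \<inter> X" unfolding E_def h_def by (rule Ek_restr)
  have EX: "E \<subseteq> X" using ED by blast
  have "M (restr E (restr (X - Fk h (j + 1)) h)) powr s = (\<Sum>x\<in>E. phi x (g x))"
  proof (rule M_add'[OF EX])
    fix x assume x: "x \<in> E"
    hence "x \<notin> Fk h (j + 1)" using Ek_Fk_disj[of h j] by (auto simp: E_def)
    thus "restr (X - Fk h (j + 1)) h x = g x" using x ED by (auto simp: restr_def h_def)
  qed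
  moreover have "rho (restr (X - Fk h (j + 1)) h) E \<le> 2 powr real_of_int (j + 1)"
    using S_ge[OF EX, of "restr (X - Fk h (j + 1)) h"] S_Fk[of h "j + 1"] by linarith
  hence "M (restr E (restr (X - Fk h (j + 1)) h)) powr s \<le> (2 powr real_of_int (j + 1)) powr s * m E"
    using rho_le_iff[OF EX Ene] by simp
  moreover have "(2 powr real_of_int (j + 1)) powr s = 2 powr (real_of_int (j + 1) * s)" by (rule powr_powr)
  ultimately show ?thesis unfolding E_def h_def by simp
qed

definition KS where "KS q = 2 powr (q + 1) / cc powr s * 2 powr (real C0 * (q - s) + s) * C2 q"

lemma KS_pos: "q > 0 \<Longrightarrow> KS q > 0"
  unfolding KS_def using C2_pos[of q] cc_pos by simp

end

context addl begin

lemma SUP_I: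
  assumes q: "s \<le> q" and J: "finite J"
    and dj: "\<And>i j. i \<in> J \<Longrightarrow> j \<in> J \<Longrightarrow> i \<noteq> j \<Longrightarrow> D i \<inter> D j = {}"
    and DX: "\<And>i. i \<in> J \<Longrightarrow> D i \<subseteq> X"
  shows "(\<Sum>i\<in>J. I q (restr (D i) g)) \<le> KS q * I q (restr (\<Union>i\<in>J. D i) g)"
proof -
  have q0: "q > 0" using q s_pos by simp
  define D' where "D' = (\<Union>i\<in>J. D i)"
  have D'X: "D' \<subseteq> X" using DX by (auto simp: D'_def)
  have DD': "D i \<subseteq> D'" if "i \<in> J" for i using that by (auto simp: D'_def)
  define h where "h = restr D' g"
  define Lh where "Lh = Lset h"
  define psi where "psi i k x = (if x \<in> Ek (restr (D i) g) k \<inter> Fk h (k - int C0)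
       then 2 powr (real_of_int k * (q - s)) * phi x (g x) else 0)" for i k x
  define bx where "bx x = (\<Sum>j\<in>Lh. if x \<in> Ek h j then 2 powr (real_of_int (j + int C0) * (q - s)) * phi x (g x) else 0)" for x
  define A where "A = 2 powr (q + 1) / cc powr s"
  have psi0: "0 \<le> psi i k x" for i k x using phi_nonneg by (simp add: psi_def)
  have bx0: "0 \<le> bx x" for x unfolding bx_def using phi_nonneg by (intro sum_nonneg) auto
  have cs: "0 < cc powr s" using cc_pos by simp
  have step: "I q (restr (D i) g) \<le> A * (\<Sum>k\<in>Lset (restr (D i) g). \<Sum>x\<in>X. psi i k x)" if i: "i \<in> J" for i
  proof -
    define gi where "gi = restr (D i) g"
    have t: "2 powr (real_of_int k * q) * m (Ek gi k) \<le> 2 / cc powr s * (\<Sum>x\<in>X. psi i k x)"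
      if k: "k \<in> Lset gi" for k
    proof -
      define E where "E = Ek gi k"
      define F where "F = Fk h (k - int C0)"
      have EX: "E \<subseteq> X" unfolding E_def by (rule Ek_X)
      have mb: "(cc * 2 powr real_of_int k) powr s * m E \<le> 2 * (\<Sum>x\<in>E \<inter> F. phi x (g x))"
        using mE_bound[OF DD'[OF i] D'X, where g=g and k=k] k unfolding E_def F_def gi_def h_def by simp
      have e1: "(cc * 2 powr real_of_int k) powr s = cc powr s * 2 powr (real_of_int k * s)"
        using cc_pos by (simp add: powr_mult powr_powr)
      have e2: "2 powr (real_of_int k * q) = 2 powr (real_of_int k * (q - s)) * 2 powr (real_of_int k * s)"
        by (simp add: powr_add[symmetric] algebra_simps)
      have e3: "(\<Sum>x\<in>X. psi i k x) = 2 powr (real_of_int k * (q - s)) * (\<Sum>x\<in>E \<inter> F. phi x (g x))"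
      proof -
        have "(\<Sum>x\<in>X. psi i k x) = (\<Sum>x\<in>X. if x \<in> E \<inter> F then 2 powr (real_of_int k * (q - s)) * phi x (g x) else 0)"
          unfolding psi_def E_def F_def gi_def by simp
        also have "\<dots> = (\<Sum>x\<in>X \<inter> (E \<inter> F). 2 powr (real_of_int k * (q - s)) * phi x (g x))"
          using finX by (simp add: sum.inter_restrict)
        also have "X \<inter> (E \<inter> F) = E \<inter> F" using EX by blast
        finally show ?thesis by (simp add: sum_distrib_left)
      qed
      have "2 powr (real_of_int k * q) * m E
          = 2 powr (real_of_int k * (q - s)) * ((cc * 2 powr real_of_int k) powr s * m E) / cc powr s"
        unfolding e1 e2 using cs by (simp add: field_simps)
      also have "\<dots> \<le> 2 powr (real_of_int k * (q - s)) * (2 * (\<Sum>x\<in>E \<inter> F. phi x (g x))) / cc powr s"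
        using mb cs by (intro divide_right_mono mult_left_mono) auto
      also have "\<dots> = 2 / cc powr s * (\<Sum>x\<in>X. psi i k x)" unfolding e3 by (simp add: field_simps)
      finally show ?thesis unfolding E_def .
    qed
    have "I q gi \<le> 2 powr q * (\<Sum>k\<in>Lset gi. 2 powr (real_of_int k * q) * m (Ek gi k))"
      by (rule N1[OF q0])
    also have "\<dots> \<le> 2 powr q * (\<Sum>k\<in>Lset gi. 2 / cc powr s * (\<Sum>x\<in>X. psi i k x))"
      using t by (intro mult_left_mono sum_mono) auto
    also have "\<dots> = A * (\<Sum>k\<in>Lset gi. \<Sum>x\<in>X. psi i k x)"
      unfolding A_def by (simp add: sum_distrib_left powr_add mult.assoc)
    finally show ?thesis unfolding gi_def .
  qed
  have pw: "(\<Sum>i\<in>J. \<Sum>k\<in>Lset (restr (D i) g). psi i k x) \<le> bx x" if x: "x \<in> X" for x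
  proof (rule sum_at_most_one[OF J, where P="\<lambda>i. x \<in> D i"])
    show "i = j" if "i \<in> J" "j \<in> J" "x \<in> D i" "x \<in> D j" for i j using dj that by blast
  next
    fix i assume i: "i \<in> J" "x \<notin> D i"
    have "psi i k x = 0" for k
      using Ek_restr[of "D i" g k] i(2) by (auto simp: psi_def)
    thus "(\<Sum>k\<in>Lset (restr (D i) g). psi i k x) = 0" by simp
  next
    show "0 \<le> bx x" by (rule bx0)
  next
    fix i assume i: "i \<in> J" "x \<in> D i"
    show "(\<Sum>k\<in>Lset (restr (D i) g). psi i k x) \<le> bx x"
    proof (rule sum_at_most_one[OF Lset_fin, where P="\<lambda>k. x \<in> Ek (restr (D i) g) k"])
      show "k = l" if "x \<in> Ek (restr (D i) g) k" "x \<in> Ek (restr (D i) g) l" for k l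
        using Ek_disj[of k l "restr (D i) g"] that by blast
    next
      fix k assume "x \<notin> Ek (restr (D i) g) k"
      thus "psi i k x = 0" by (simp add: psi_def)
    next
      show "0 \<le> bx x" by (rule bx0)
    next
      fix k assume k: "x \<in> Ek (restr (D i) g) k"
      show "psi i k x \<le> bx x"
      proof (cases "x \<in> Fk h (k - int C0)")
        case False then show ?thesis using bx0 by (simp add: psi_def)
      next
        case True
        then obtain j where j: "k - int C0 \<le> j" "x \<in> Ek h j" unfolding Fk_def by auto
        have jL: "j \<in> Lh" using j(2) by (auto simp: Lh_def Lset_def)
        have "psi i k x = 2 powr (real_of_int k * (q - s)) * phi x (g x)"
          using k True by (simp add: psi_def)
        also have "\<dots> \<le> 2 powr (real_of_int (j + int C0) * (q - s)) * phi x (g x)"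
        proof -
          have "real_of_int k * (q - s) \<le> real_of_int (j + int C0) * (q - s)"
            using j(1) q by (intro mult_right_mono) auto
          hence "(2::real) powr (real_of_int k * (q - s)) \<le> 2 powr (real_of_int (j + int C0) * (q - s))"
            by (intro powr_mono) auto
          thus ?thesis using phi_nonneg by (intro mult_right_mono) auto
        qed
        also have "\<dots> = (if x \<in> Ek h j then 2 powr (real_of_int (j + int C0) * (q - s)) * phi x (g x) else 0)"
          using j(2) by simp
        also have "\<dots> \<le> bx x" unfolding bx_def
          using jL Lset_fin phi_nonneg by (intro member_le_sum) (auto simp: Lh_def)
        finally show ?thesis .
      qed
    qed
  qed
  have SB: "(\<Sum>x\<in>X. bx x) \<le> 2 powr (real C0 * (q - s) + s) * (C2 q * I q h)"
  proof -
  have "(\<Sum>x\<in>X. bx x) = (\<Sum>j\<in>Lh. 2 powr (real_of_int (j + int C0) * (q - s)) * (\<Sum>x\<in>Ek h j. phi x (g x)))"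
  proof -
    have "(\<Sum>x\<in>X. bx x) = (\<Sum>j\<in>Lh. \<Sum>x\<in>X. if x \<in> Ek h j then 2 powr (real_of_int (j + int C0) * (q - s)) * phi x (g x) else 0)"
      unfolding bx_def by (rule sum.swap)
    also have "\<dots> = (\<Sum>j\<in>Lh. \<Sum>x\<in>X \<inter> Ek h j. 2 powr (real_of_int (j + int C0) * (q - s)) * phi x (g x))"
      by (simp only: sum.inter_restrict[OF finX])
    also have "\<dots> = (\<Sum>j\<in>Lh. 2 powr (real_of_int (j + int C0) * (q - s)) * (\<Sum>x\<in>Ek h j. phi x (g x)))"
    proof (rule sum.cong[OF refl])
      fix j have "X \<inter> Ek h j = Ek h j" using Ek_X[of h j] by blast
      thus "(\<Sum>x\<in>X \<inter> Ek h j. 2 powr (real_of_int (j + int C0) * (q - s)) * phi x (g x))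
          = 2 powr (real_of_int (j + int C0) * (q - s)) * (\<Sum>x\<in>Ek h j. phi x (g x))"
        by (simp add: sum_distrib_left)
    qed
    finally show ?thesis .
  qed
  also have "\<dots> \<le> (\<Sum>j\<in>Lh. 2 powr (real_of_int (j + int C0) * (q - s)) * (2 powr (real_of_int (j + 1) * s) * m (Ek h j)))"
    using Eh_bound[OF D'X] by (intro sum_mono mult_left_mono) (auto simp: Lh_def h_def)
  also have "\<dots> = 2 powr (real C0 * (q - s) + s) * (\<Sum>j\<in>Lh. 2 powr (real_of_int j * q) * m (Ek h j))"
  proof -
    have "2 powr (real_of_int (j + int C0) * (q - s)) * (2 powr (real_of_int (j + 1) * s) * m (Ek h j))
        = 2 powr (real C0 * (q - s) + s) * (2 powr (real_of_int j * q) * m (Ek h j))" for j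
    proof -
      have "2 powr (real_of_int (j + int C0) * (q - s)) * 2 powr (real_of_int (j + 1) * s)
          = (2::real) powr (real_of_int (j + int C0) * (q - s) + real_of_int (j + 1) * s)"
        by (rule powr_add[symmetric])
      also have "real_of_int (j + int C0) * (q - s) + real_of_int (j + 1) * s = (real C0 * (q - s) + s) + real_of_int j * q"
        by (simp add: algebra_simps)
      also have "(2::real) powr \<dots> = 2 powr (real C0 * (q - s) + s) * 2 powr (real_of_int j * q)"
        by (rule powr_add)
      finally show ?thesis by (simp add: mult_ac)
    qed
    note t = this
    show ?thesis unfolding sum_distrib_left t ..
  qed
  also have "\<dots> \<le> 2 powr (real C0 * (q - s) + s) * (C2 q * I q h)"
    unfolding Lh_def by (intro mult_left_mono N2[OF q0]) auto
  finally show ?thesis .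
  qed
  have "(\<Sum>i\<in>J. I q (restr (D i) g)) \<le> (\<Sum>i\<in>J. A * (\<Sum>k\<in>Lset (restr (D i) g). \<Sum>x\<in>X. psi i k x))"
    using step by (rule sum_mono)
  also have "\<dots> = A * (\<Sum>x\<in>X. \<Sum>i\<in>J. \<Sum>k\<in>Lset (restr (D i) g). psi i k x)"
    by (simp add: sum_distrib_left sum.swap[of _ "Lset _"] sum.swap[of _ J])
  also have "\<dots> \<le> A * (\<Sum>x\<in>X. bx x)"
    using pw cs by (intro mult_left_mono sum_mono) (auto simp: A_def)
  also have "\<dots> \<le> A * (2 powr (real C0 * (q - s) + s) * (C2 q * I q h))"
    using SB cs by (intro mult_left_mono) (auto simp: A_def)
  finally have "(\<Sum>i\<in>J. I q (restr (D i) g)) \<le> A * (2 powr (real C0 * (q - s) + s) * (C2 q * I q h))" .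
  thus ?thesis unfolding KS_def A_def h_def D'_def by (simp add: mult_ac)
qed

end

lemma has_sum_sum_fun:
  fixes f :: "'b \<Rightarrow> 'c \<Rightarrow> real"
  assumes "finite L" "\<And>l. l \<in> L \<Longrightarrow> (f l has_sum a l) A"
  shows "((\<lambda>x. \<Sum>l\<in>L. f l x) has_sum (\<Sum>l\<in>L. a l)) A"
  using assms
proof (induction L rule: finite_induct)
  case empty
  then show ?case by (simp add: has_sum_0)
next
  case (insert l L)
  have "((\<lambda>x. f l x + (\<Sum>l\<in>L. f l x)) has_sum (a l + (\<Sum>l\<in>L. a l))) A"
    using insert by (intro has_sum_add) auto
  then show ?case using insert by simp
qed

lemma geo_int:
  fixes p :: real and l :: int
  assumes p: "p > 0"
  shows "((\<lambda>k::int. if k \<le> l then 2 powr (real_of_int k * p) else 0) has_sum (2 powr (real_of_int l * p) / (1 - 2 powr (-p)))) UNIV"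
proof -
  define x :: real where "x = 2 powr (-p)"
  have x0: "0 \<le> x" and x1: "x < 1" using two_pow_neg'[OF p] by (auto simp: x_def)
  have "(\<lambda>n. x ^ n) sums (1 / (1 - x))" using x0 x1 by (intro geometric_sums) simp
  hence "(\<lambda>n. 2 powr (real_of_int l * p) * x ^ n) sums (2 powr (real_of_int l * p) * (1 / (1 - x)))"
    by (rule sums_mult)
  hence hs: "((\<lambda>n. 2 powr (real_of_int l * p) * x ^ n) has_sum (2 powr (real_of_int l * p) / (1 - x))) UNIV"
    by (intro sums_nonneg_imp_has_sum) (use x0 in auto)
  define h :: "nat \<Rightarrow> int" where "h n = l - int n" for n
  have inj: "inj_on h UNIV" by (auto simp: h_def inj_on_def)
  have img: "h ` UNIV = {..l}"
  proof
    show "h ` UNIV \<subseteq> {..l}" by (auto simp: h_def)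
    show "{..l} \<subseteq> h ` UNIV"
    proof
      fix k assume "k \<in> {..l}"
      hence "k = h (nat (l - k))" by (auto simp: h_def)
      thus "k \<in> h ` UNIV" by blast
    qed
  qed
  have comp: "((\<lambda>k::int. 2 powr (real_of_int k * p)) \<circ> h) = (\<lambda>n. 2 powr (real_of_int l * p) * x ^ n)"
  proof
    fix n
    have "x ^ n = 2 powr (-p * real n)" unfolding x_def by (simp add: powr_realpow[symmetric] powr_powr)
    hence "2 powr (real_of_int l * p) * x ^ n = 2 powr (real_of_int l * p) * 2 powr (- p * real n)" by simp
    also have "\<dots> = 2 powr (real_of_int l * p + (- p * real n))" by (rule powr_add[symmetric])
    also have "real_of_int l * p + (- p * real n) = real_of_int (h n) * p" by (simp add: h_def algebra_simps)
    finally show "((\<lambda>k::int. 2 powr (real_of_int k * p)) \<circ> h) n = 2 powr (real_of_int l * p) * x ^ n" by simp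
  qed
  have "((\<lambda>k::int. 2 powr (real_of_int k * p)) has_sum (2 powr (real_of_int l * p) / (1 - x))) {..l}"
    using has_sum_reindex[OF inj, of "\<lambda>k::int. 2 powr (real_of_int k * p)"] hs unfolding img comp by simp
  thus ?thesis unfolding x_def
    by (subst has_sum_cong_neutral[where T="{..l}" and g="\<lambda>k::int. 2 powr (real_of_int k * p)"]) auto
qed

lemma infsum_fin_supp:
  fixes a :: "int \<Rightarrow> real"
  assumes "finite L" "\<And>k. k \<notin> L \<Longrightarrow> a k = 0"
  shows "(\<Sum>\<^sub>\<infinity>k. a k) = (\<Sum>k\<in>L. a k)"
proof -
  have "(\<Sum>\<^sub>\<infinity>k. a k) = (\<Sum>\<^sub>\<infinity>k\<in>L. a k)"
    using assms by (intro infsum_cong_neutral) auto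
  thus ?thesis using assms by simp
qed

lemma T2_eq:
  fixes e :: "int \<Rightarrow> real"
  assumes p: "p > 0" and L: "finite L" and e: "\<And>k. k \<notin> L \<Longrightarrow> e k = 0"
  shows "(\<Sum>\<^sub>\<infinity>k::int. 2 powr (real_of_int k * p) * (\<Sum>\<^sub>\<infinity>l\<in>{k..}. e l))
     = (\<Sum>l\<in>L. 2 powr (real_of_int l * p) * e l) / (1 - 2 powr (-p))"
proof -
  have inner: "(\<Sum>\<^sub>\<infinity>l\<in>{k..}. e l) = (\<Sum>l\<in>L. if k \<le> l then e l else 0)" for k
  proof -
    have "(\<Sum>\<^sub>\<infinity>l\<in>{k..}. e l) = (\<Sum>\<^sub>\<infinity>l\<in>L \<inter> {k..}. e l)"
      using e by (intro infsum_cong_neutral) auto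
    also have "\<dots> = (\<Sum>l\<in>L \<inter> {k..}. e l)" using L by simp
    also have "\<dots> = (\<Sum>l\<in>L. if k \<le> l then e l else 0)" using L by (simp add: sum.inter_restrict)
    finally show ?thesis .
  qed
  have fn: "(\<lambda>k::int. 2 powr (real_of_int k * p) * (\<Sum>\<^sub>\<infinity>l\<in>{k..}. e l))
     = (\<lambda>k. \<Sum>l\<in>L. e l * (if k \<le> l then 2 powr (real_of_int k * p) else 0))"
    unfolding inner by (auto simp: sum_distrib_left intro!: sum.cong)
  have "((\<lambda>k. \<Sum>l\<in>L. e l * (if k \<le> l then 2 powr (real_of_int k * p) else 0)) has_sum
      (\<Sum>l\<in>L. e l * (2 powr (real_of_int l * p) / (1 - 2 powr (-p))))) UNIV"
    using L by (intro has_sum_sum_fun has_sum_cmult_right geo_int[OF p])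
  hence "(\<Sum>\<^sub>\<infinity>k::int. 2 powr (real_of_int k * p) * (\<Sum>\<^sub>\<infinity>l\<in>{k..}. e l))
      = (\<Sum>l\<in>L. e l * (2 powr (real_of_int l * p) / (1 - 2 powr (-p))))"
    unfolding fn by (rule infsumI)
  also have "\<dots> = (\<Sum>l\<in>L. 2 powr (real_of_int l * p) * e l) / (1 - 2 powr (-p))"
    by (simp add: sum_divide_distrib mult_ac)
  finally show ?thesis .
qed

lemma Lr_addl:
  fixes X :: "'a set" and w :: "'a \<Rightarrow> real"
  assumes X: "finite X" and nu: "outer_measure_on X \<nu>" and w: "\<forall>x\<in>X. 0 < w x" and r: "0 < r"
  shows "addl X \<nu> (Lr_norm X w r) r (\<lambda>x y. if x \<in> X then w x * \<bar>y\<bar> powr r else 0)"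
proof -
  have w': "\<And>x. x \<in> X \<Longrightarrow> 0 \<le> w x" using w by (simp add: less_imp_le)
  have sum_eq: "(\<Sum>x\<in>X. w x * \<bar>restr D g x\<bar> powr r) = (\<Sum>x\<in>D. w x * \<bar>g x\<bar> powr r)" if D: "D \<subseteq> X" for D g
  proof -
    have "(\<Sum>x\<in>X. w x * \<bar>restr D g x\<bar> powr r) = (\<Sum>x\<in>X. if x \<in> D then w x * \<bar>g x\<bar> powr r else 0)"
      by (intro sum.cong) (auto simp: restr_def)
    also have "\<dots> = (\<Sum>x\<in>X \<inter> D. w x * \<bar>g x\<bar> powr r)" using X by (simp add: sum.inter_restrict)
    also have "X \<inter> D = D" using D by blast
    finally show ?thesis .
  qed
  have sum_nn: "0 \<le> (\<Sum>x\<in>D. w x * \<bar>g x\<bar> powr r)" if "D \<subseteq> X" for D g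
    using w' that by (intro sum_nonneg mult_nonneg_nonneg) auto
  have pow: "Lr_norm X w r (restr D g) powr r = (\<Sum>x\<in>D. w x * \<bar>g x\<bar> powr r)" if D: "D \<subseteq> X" for D g
    unfolding Lr_norm_def sum_eq[OF D] using sum_nn[OF D] r by (simp add: powr_powr)
  show ?thesis
  proof (unfold_locales)
    show "finite X" by (rule X)
    show "outer_measure_on X \<nu>" by (rule nu)
    show "0 < r" by (rule r)
    show "0 \<le> Lr_norm X w r g" for g by (simp add: Lr_norm_def)
    show "Lr_norm X w r (\<lambda>_. 0) = 0" by (simp add: Lr_norm_def)
  next
    fix g :: "'a \<Rightarrow> real" and D D' assume DD: "D \<subseteq> D'" "D' \<subseteq> X"
    have "(\<Sum>x\<in>X. w x * \<bar>restr D g x\<bar> powr r) \<le> (\<Sum>x\<in>X. w x * \<bar>restr D' g x\<bar> powr r)"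
      using DD w' by (intro sum_mono) (auto simp: restr_def intro!: mult_nonneg_nonneg)
    thus "Lr_norm X w r (restr D g) \<le> Lr_norm X w r (restr D' g)"
      unfolding Lr_norm_def using r w' by (intro powr_mono2) (auto intro!: sum_nonneg mult_nonneg_nonneg)
  next
    fix g :: "'a \<Rightarrow> real" and x assume x: "x \<in> X" "g x \<noteq> 0"
    have "Lr_norm X w r (restr {x} g) powr r = w x * \<bar>g x\<bar> powr r" using pow[of "{x}" g] x by simp
    moreover have "0 < w x * \<bar>g x\<bar> powr r" using w x by simp
    ultimately show "0 < Lr_norm X w r (restr {x} g)"
      by (metis less_irrefl powr_0 Lr_norm_def powr_ge_zero order_le_less)
  next
    fix x :: 'a and y :: real
    show "0 \<le> (if x \<in> X then w x * \<bar>y\<bar> powr r else 0)" using w' by (auto intro!: mult_nonneg_nonneg)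
    show "(if x \<in> X then w x * \<bar>0::real\<bar> powr r else 0) = 0" by simp
  next
    fix D :: "'a set" and g assume D: "D \<subseteq> X"
    show "Lr_norm X w r (restr D g) powr r = (\<Sum>x\<in>D. if x \<in> X then w x * \<bar>g x\<bar> powr r else 0)"
      using pow[OF D, of g] D by (auto intro!: sum.cong)
  qed
qed

lemma addl_triv: "s > 0 \<Longrightarrow> addl ({} :: 'a set) (\<lambda>_. 0) (\<lambda>_. 0) s (\<lambda>_ _. 0)"
  by unfold_locales (auto simp: outer_measure_on_def)

lemma dec_triv: "s > 0 \<Longrightarrow> K1 > 0 \<Longrightarrow> K2 > 0 \<Longrightarrow> dec ({} :: 'a set) (\<lambda>_. 0) (\<lambda>_. 0) s K1 K2"
  by unfold_locales (auto simp: outer_measure_on_def)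

theorem proposition3p5:
  fixes p q r :: real
  assumes "0 < p" and "0 < q" and "0 < r" and "r \<le> q"
  shows "\<exists>C c C'. 0 < C \<and> 0 < c \<and> 0 < C' \<and>
    (\<forall>(X :: 'a set) \<mu> \<nu> w (f :: 'a \<Rightarrow> real).
       finite X \<longrightarrow> outer_measure_on X \<mu> \<longrightarrow> outer_measure_on X \<nu> \<longrightarrow>
       (\<forall>x\<in>X. 0 < w x) \<longrightarrow>
       (let \<rho> = ell_q X \<mu> \<nu> (ell_r X w \<nu> r) q in
        \<exists>E :: int \<Rightarrow> 'a set.
          (\<forall>k l. k \<noteq> l \<longrightarrow> E k \<inter> E l = {}) \<and>
          (\<Union>k. E k) = supp_on X f \<and>
          (let F = (\<lambda>k. \<Union>l\<in>{k..}. E l) in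
           (\<forall>k::int.
              (E k \<noteq> {} \<longrightarrow> \<rho> (restr (X - F (k + 1)) f) (E k) > c * 2 powr real_of_int k) \<and>
              Linf X \<rho> (restr (X - F k) f) \<le> 2 powr real_of_int k \<and>
              superlevel X \<mu> \<rho> f (2 powr real_of_int k) \<le> \<mu> (F k) \<and>
              \<mu> (E k) \<le> C * superlevel X \<mu> \<rho> f (c * 2 powr real_of_int k)) \<and>
           (1 / C') * Lp_norm X \<mu> \<rho> p f powr p
              \<le> (\<Sum>\<^sub>\<infinity>k::int. 2 powr (real_of_int k * p) * \<mu> (E k)) \<and>
           (\<Sum>\<^sub>\<infinity>k::int. 2 powr (real_of_int k * p) * \<mu> (E k))
              \<le> C' * Lp_norm X \<mu> \<rho> p f powr p \<and>
           (1 / C') * Lp_norm X \<mu> \<rho> p f powr p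
              \<le> (\<Sum>\<^sub>\<infinity>k::int. 2 powr (real_of_int k * p) * (\<Sum>\<^sub>\<infinity>l\<in>{k..}. \<mu> (E l))) \<and>
           (\<Sum>\<^sub>\<infinity>k::int. 2 powr (real_of_int k * p) * (\<Sum>\<^sub>\<infinity>l\<in>{k..}. \<mu> (E l)))
              \<le> C' * Lp_norm X \<mu> \<rho> p f powr p)))"
proof -
  have p0: "0 < p" and q0: "0 < q" and r0: "0 < r" and rq: "r \<le> q" using assms by auto
  define K1 where "K1 = addl.KS r q"
  define K2 where "K2 = addl.KB r q"
  have K1pos: "K1 > 0" unfolding K1_def by (rule addl.KS_pos[OF addl_triv[OF r0] q0])
  have K2pos: "K2 > 0" unfolding K2_def by (rule addl.KB_pos[OF addl_triv[OF r0] q0])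
  define c where "c = dec.cc q K1 K2"
  define C where "C = dec.CC q K1 K2"
  define C2 where "C2 = dec.C2 q K1 K2 p"
  define C' where "C' = 2 powr p + C2 / (1 - 2 powr (-p))"
  have cpos: "c > 0" unfolding c_def by (rule dec.cc_pos[OF dec_triv[OF q0 K1pos K2pos]])
  have Cpos: "C > 0" unfolding C_def by (rule dec.CC_pos[OF dec_triv[OF q0 K1pos K2pos]])
  have C2pos: "C2 > 0" unfolding C2_def by (rule dec.C2_pos[OF dec_triv[OF q0 K1pos K2pos] p0])
  have den: "0 < 1 - 2 powr (-p)" "1 - 2 powr (-p) \<le> 1" using two_pow_neg'[OF p0] by auto
  have C'pos: "C' > 0" unfolding C'_def using C2pos den by (intro add_pos_pos divide_pos_pos) auto
  have C'1: "2 powr p \<le> C'" unfolding C'_def using C2pos den by simp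
  have C'2: "C2 / (1 - 2 powr (-p)) \<le> C'" unfolding C'_def by simp
  have C'3: "C2 \<le> C2 / (1 - 2 powr (-p))" using C2pos den by (simp add: le_divide_eq)
  have main: "\<forall>(X :: 'a set) \<mu> \<nu> w (f :: 'a \<Rightarrow> real).
       finite X \<longrightarrow> outer_measure_on X \<mu> \<longrightarrow> outer_measure_on X \<nu> \<longrightarrow>
       (\<forall>x\<in>X. 0 < w x) \<longrightarrow>
       (let \<rho> = ell_q X \<mu> \<nu> (ell_r X w \<nu> r) q in
        \<exists>E :: int \<Rightarrow> 'a set.
          (\<forall>k l. k \<noteq> l \<longrightarrow> E k \<inter> E l = {}) \<and>
          (\<Union>k. E k) = supp_on X f \<and>
          (let F = (\<lambda>k. \<Union>l\<in>{k..}. E l) in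
           (\<forall>k::int.
              (E k \<noteq> {} \<longrightarrow> \<rho> (restr (X - F (k + 1)) f) (E k) > c * 2 powr real_of_int k) \<and>
              Linf X \<rho> (restr (X - F k) f) \<le> 2 powr real_of_int k \<and>
              superlevel X \<mu> \<rho> f (2 powr real_of_int k) \<le> \<mu> (F k) \<and>
              \<mu> (E k) \<le> C * superlevel X \<mu> \<rho> f (c * 2 powr real_of_int k)) \<and>
           (1 / C') * Lp_norm X \<mu> \<rho> p f powr p
              \<le> (\<Sum>\<^sub>\<infinity>k::int. 2 powr (real_of_int k * p) * \<mu> (E k)) \<and>
           (\<Sum>\<^sub>\<infinity>k::int. 2 powr (real_of_int k * p) * \<mu> (E k))
              \<le> C' * Lp_norm X \<mu> \<rho> p f powr p \<and>
           (1 / C') * Lp_norm X \<mu> \<rho> p f powr p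
              \<le> (\<Sum>\<^sub>\<infinity>k::int. 2 powr (real_of_int k * p) * (\<Sum>\<^sub>\<infinity>l\<in>{k..}. \<mu> (E l))) \<and>
           (\<Sum>\<^sub>\<infinity>k::int. 2 powr (real_of_int k * p) * (\<Sum>\<^sub>\<infinity>l\<in>{k..}. \<mu> (E l)))
              \<le> C' * Lp_norm X \<mu> \<rho> p f powr p))"
  proof (intro allI impI)
    fix X :: "'a set" and \<mu> \<nu> :: "'a set \<Rightarrow> real" and w :: "'a \<Rightarrow> real" and f :: "'a \<Rightarrow> real"
    assume X: "finite X" and mu: "outer_measure_on X \<mu>" and nu: "outer_measure_on X \<nu>"
      and w: "\<forall>x\<in>X. 0 < w x"
    define phi where "phi = (\<lambda>x y. if x \<in> X then w x * \<bar>y\<bar> powr r else (0::real))"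
    interpret N: addl X \<nu> "Lr_norm X w r" r phi
      unfolding phi_def by (rule Lr_addl[OF X nu w r0])
    have rhoN: "N.rho = ell_r X w \<nu> r" by (intro ext) (simp add: N.rho_def ell_r_def)
    define M2 where "M2 = Lp_norm X \<nu> (ell_r X w \<nu> r) q"
    have M2_pow: "M2 g powr q = N.I q g" for g
      unfolding M2_def rhoN[symmetric] by (rule N.Lp_pow[OF q0])
    interpret T: dec X \<mu> M2 q K1 K2
    proof unfold_locales
      show "finite X" by (rule X)
      show "outer_measure_on X \<mu>" by (rule mu)
      show "0 < q" by (rule q0)
      show "0 < K1" by (rule K1pos)
      show "0 < K2" by (rule K2pos)
      show "0 \<le> M2 g" for g unfolding M2_def rhoN[symmetric] by (rule N.Lp_nonneg)
      show "M2 (\<lambda>_. 0) = 0" unfolding M2_def rhoN[symmetric] by (rule N.Lp_zero[OF q0])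
      show "M2 (restr D g) \<le> M2 (restr D' g)" if "D \<subseteq> D'" "D' \<subseteq> X" for g D D'
        unfolding M2_def rhoN[symmetric] by (rule N.Lp_restr_mono[OF q0 that(1)])
      show "0 < M2 (restr {x} g)" if "x \<in> X" "g x \<noteq> 0" for g x
        unfolding M2_def rhoN[symmetric] by (rule N.Lp_pos_point[of x g, OF that q0])
    next
      fix I :: "'a set set" and D :: "'a set \<Rightarrow> 'a set" and g
      assume I: "finite I" and dj: "\<And>i j. i \<in> I \<Longrightarrow> j \<in> I \<Longrightarrow> i \<noteq> j \<Longrightarrow> D i \<inter> D j = {}"
        and DX: "\<And>i. i \<in> I \<Longrightarrow> D i \<subseteq> X"
      show "(\<Sum>i\<in>I. M2 (restr (D i) g) powr q) \<le> K1 * M2 (restr (\<Union>i\<in>I. D i) g) powr q"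
        unfolding M2_pow K1_def by (rule N.SUP_I[OF rq I dj DX])
    next
      fix D1 D2 g assume D: "D1 \<inter> D2 = {}" "D1 \<subseteq> X" "D2 \<subseteq> X"
      show "M2 (restr (D1 \<union> D2) g) powr q \<le> K2 * (M2 (restr D1 g) powr q + M2 (restr D2 g) powr q)"
        unfolding M2_pow K2_def by (rule N.SUB_I[OF q0 D])
    qed
    have rhoT: "T.rho = ell_q X \<mu> \<nu> (ell_r X w \<nu> r) q"
      by (intro ext) (simp only: T.rho_def ell_q_def, simp add: M2_def)
    define L where "L = T.Lset f"
    have Lfin: "finite L" unfolding L_def by (rule T.Lset_fin)
    define T1 where "T1 = (\<Sum>l\<in>L. 2 powr (real_of_int l * p) * \<mu> (T.Ek f l))"
    have Ezero: "\<mu> (T.Ek f k) = 0" if "k \<notin> L" for k using that T.m_empty by (simp add: L_def T.Lset_def)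
    have T1inf: "(\<Sum>\<^sub>\<infinity>k::int. 2 powr (real_of_int k * p) * \<mu> (T.Ek f k)) = T1"
      unfolding T1_def using Ezero by (intro infsum_fin_supp[OF Lfin]) simp
    have T2inf: "(\<Sum>\<^sub>\<infinity>k::int. 2 powr (real_of_int k * p) * (\<Sum>\<^sub>\<infinity>l\<in>{k..}. \<mu> (T.Ek f l))) = T1 / (1 - 2 powr (-p))"
      unfolding T1_def by (rule T2_eq[OF p0 Lfin Ezero])
    have Lp: "Lp_norm X \<mu> T.rho p f powr p = T.I p f" by (rule T.Lp_pow[OF p0])
    have n1: "T.I p f \<le> 2 powr p * T1" unfolding T1_def L_def by (rule T.N1[OF p0])
    have n2: "T1 \<le> C2 * T.I p f" unfolding T1_def L_def C2_def by (rule T.N2[OF p0])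
    have I0: "0 \<le> T.I p f" by (rule T.I_nonneg[OF p0])
    have T10: "0 \<le> T1" unfolding T1_def using T.m_nonneg[OF T.Ek_X] by (intro sum_nonneg mult_nonneg_nonneg) auto
    have i1: "(1 / C') * T.I p f \<le> T1"
    proof -
      have "T.I p f \<le> C' * T1" using n1 C'1 T10 by (meson mult_right_mono order_trans)
      thus ?thesis using C'pos by (simp add: field_simps)
    qed
    have i2: "T1 \<le> C' * T.I p f"
    proof -
      have "C2 \<le> C'" using C'2 C'3 by linarith
      thus ?thesis using n2 I0 by (meson mult_right_mono order_trans)
    qed
    have i3: "T1 \<le> T1 / (1 - 2 powr (-p))" using T10 den by (simp add: le_divide_eq mult_left_le)
    have i4: "T1 / (1 - 2 powr (-p)) \<le> C' * T.I p f"
    proof -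
      have "T1 / (1 - 2 powr (-p)) \<le> C2 * T.I p f / (1 - 2 powr (-p))"
        using n2 den by (intro divide_right_mono) auto
      also have "\<dots> = C2 / (1 - 2 powr (-p)) * T.I p f" by simp
      also have "\<dots> \<le> C' * T.I p f" using C'2 I0 by (intro mult_right_mono) auto
      finally show ?thesis .
    qed
    have A: "(\<forall>k l. k \<noteq> l \<longrightarrow> T.Ek f k \<inter> T.Ek f l = {}) \<and>
          (\<Union>k. T.Ek f k) = supp_on X f \<and>
          ((\<forall>k::int.
              (T.Ek f k \<noteq> {} \<longrightarrow> T.rho (restr (X - T.Fk f (k + 1)) f) (T.Ek f k) > c * 2 powr real_of_int k) \<and>
              Linf X T.rho (restr (X - T.Fk f k) f) \<le> 2 powr real_of_int k \<and>
              superlevel X \<mu> T.rho f (2 powr real_of_int k) \<le> \<mu> (T.Fk f k) \<and>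
              \<mu> (T.Ek f k) \<le> C * superlevel X \<mu> T.rho f (c * 2 powr real_of_int k)) \<and>
           (1 / C') * Lp_norm X \<mu> T.rho p f powr p
              \<le> (\<Sum>\<^sub>\<infinity>k::int. 2 powr (real_of_int k * p) * \<mu> (T.Ek f k)) \<and>
           (\<Sum>\<^sub>\<infinity>k::int. 2 powr (real_of_int k * p) * \<mu> (T.Ek f k))
              \<le> C' * Lp_norm X \<mu> T.rho p f powr p \<and>
           (1 / C') * Lp_norm X \<mu> T.rho p f powr p
              \<le> (\<Sum>\<^sub>\<infinity>k::int. 2 powr (real_of_int k * p) * (\<Sum>\<^sub>\<infinity>l\<in>{k..}. \<mu> (T.Ek f l))) \<and>
           (\<Sum>\<^sub>\<infinity>k::int. 2 powr (real_of_int k * p) * (\<Sum>\<^sub>\<infinity>l\<in>{k..}. \<mu> (T.Ek f l)))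
              \<le> C' * Lp_norm X \<mu> T.rho p f powr p)"
    proof (intro conjI allI impI)
      show "T.Ek f k \<inter> T.Ek f l = {}" if "k \<noteq> l" for k l using T.Ek_disj[OF that] .
      show "(\<Union>k. T.Ek f k) = supp_on X f" by (rule T.Ek_union)
      show "T.Ek f k \<noteq> {} \<Longrightarrow> c * 2 powr real_of_int k < T.rho (restr (X - T.Fk f (k + 1)) f) (T.Ek f k)" for k
        unfolding c_def by (rule T.prop_a)
      show "Linf X T.rho (restr (X - T.Fk f k) f) \<le> 2 powr real_of_int k" for k
        using T.S_Fk[of f k] unfolding T.S_def .
      show "superlevel X \<mu> T.rho f (2 powr real_of_int k) \<le> \<mu> (T.Fk f k)" for k
        using T.prop_c[of f k] unfolding T.sig_def .
      show "\<mu> (T.Ek f k) \<le> C * superlevel X \<mu> T.rho f (c * 2 powr real_of_int k)" for k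
        using T.prop_d[of f k] unfolding T.sig_def C_def c_def .
      show "(1 / C') * Lp_norm X \<mu> T.rho p f powr p \<le> (\<Sum>\<^sub>\<infinity>k::int. 2 powr (real_of_int k * p) * \<mu> (T.Ek f k))"
        unfolding Lp T1inf by (rule i1)
      show "(\<Sum>\<^sub>\<infinity>k::int. 2 powr (real_of_int k * p) * \<mu> (T.Ek f k)) \<le> C' * Lp_norm X \<mu> T.rho p f powr p"
        unfolding Lp T1inf by (rule i2)
      show "(1 / C') * Lp_norm X \<mu> T.rho p f powr p
              \<le> (\<Sum>\<^sub>\<infinity>k::int. 2 powr (real_of_int k * p) * (\<Sum>\<^sub>\<infinity>l\<in>{k..}. \<mu> (T.Ek f l)))"
        unfolding Lp T2inf using i1 i3 by linarith
      show "(\<Sum>\<^sub>\<infinity>k::int. 2 powr (real_of_int k * p) * (\<Sum>\<^sub>\<infinity>l\<in>{k..}. \<mu> (T.Ek f l)))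
              \<le> C' * Lp_norm X \<mu> T.rho p f powr p"
        unfolding Lp T2inf by (rule i4)
    qed
    show "let \<rho> = ell_q X \<mu> \<nu> (ell_r X w \<nu> r) q in
        \<exists>E :: int \<Rightarrow> 'a set.
          (\<forall>k l. k \<noteq> l \<longrightarrow> E k \<inter> E l = {}) \<and>
          (\<Union>k. E k) = supp_on X f \<and>
          (let F = (\<lambda>k. \<Union>l\<in>{k..}. E l) in
           (\<forall>k::int.
              (E k \<noteq> {} \<longrightarrow> \<rho> (restr (X - F (k + 1)) f) (E k) > c * 2 powr real_of_int k) \<and>
              Linf X \<rho> (restr (X - F k) f) \<le> 2 powr real_of_int k \<and>
              superlevel X \<mu> \<rho> f (2 powr real_of_int k) \<le> \<mu> (F k) \<and>
              \<mu> (E k) \<le> C * superlevel X \<mu> \<rho> f (c * 2 powr real_of_int k)) \<and>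
           (1 / C') * Lp_norm X \<mu> \<rho> p f powr p
              \<le> (\<Sum>\<^sub>\<infinity>k::int. 2 powr (real_of_int k * p) * \<mu> (E k)) \<and>
           (\<Sum>\<^sub>\<infinity>k::int. 2 powr (real_of_int k * p) * \<mu> (E k))
              \<le> C' * Lp_norm X \<mu> \<rho> p f powr p \<and>
           (1 / C') * Lp_norm X \<mu> \<rho> p f powr p
              \<le> (\<Sum>\<^sub>\<infinity>k::int. 2 powr (real_of_int k * p) * (\<Sum>\<^sub>\<infinity>l\<in>{k..}. \<mu> (E l))) \<and>
           (\<Sum>\<^sub>\<infinity>k::int. 2 powr (real_of_int k * p) * (\<Sum>\<^sub>\<infinity>l\<in>{k..}. \<mu> (E l)))
              \<le> C' * Lp_norm X \<mu> \<rho> p f powr p)"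
      unfolding Let_def rhoT[symmetric]
      by (rule exI[of _ "T.Ek f"]) (rule A[unfolded T.Fk_def])
  qed
  show ?thesis
    by (rule exI[of _ C], rule exI[of _ c], rule exI[of _ C']) (use Cpos cpos C'pos main in blast)
qed

end
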